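(* Let $X_1,X_2,Y$ be cellular spaces with $X_1,X_2$ compact, let $r\ge0$, and let $a_i\colon X_i\to Y$, $i=1,2$, be maps such that the constant map $X_i\to Y$ is strongly $r$-similar to $a_i$. Then the constant map $X_1\vee X_2\to Y$ is strongly $r$-similar to $a_1\,\bar\vee\,a_2\colon X_1\vee X_2\to Y$ (the map restricting to $a_i$ on $X_i$).
   Context: Cellular space = based CW complex; maps based. Strong similarity: $\langle W\rangle$ = free abelian group on a set $W$. $Y^X$ = based maps (compact-open), based at the constant map; $Y^X_a$ = path component of $a$; $V\mapsto V|_R$ restriction; $\mathcal F_n(X)$ = finite $R\subseteq X$ containing the basepoint with $|R|\le n+1$; $\langle Y^X\rangle^{(s)}=\{V:V|_R=0\ \forall R\in\mathcal F_{s-1}(X)\}$. For unbased $U,V$: $V^{(U)}$ = unbased maps; $\Xi^U(v)$ = constant map at $v$; for $U=\coprod_iU_i$ the combining product $\boxed{\sqcup}_i\langle w_i\rangle=\langle w\rangle$, $w|_{U_i}=w_i$, multilinear. For nonempty finite $E$: simplex $\Delta E$, faces $\Delta F$; layouts = sets $A$ of pairwise disjoint nonempty subsets; $\Delta[A]=\coprod_{F\in A}\Delta F$; $S\in\langle V^{(\Delta E)}\rangle$ fissile if $S|_{\Delta[A]}=\boxed{\sqcup}_{F\in A}S|_{\Delta F}$ for all layouts. $U\wr X=(U\times X)/(U\times\{x_0\})$, $\#^X(w)(u\wr x)=w(u)(x)$, $\langle (Y^X)^{(U)}\rangle^{(s)}_X=\langle\#^X\rangle^{-1}\langle Y^{U\wr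 X}\rangle^{(s)}$. $a\overset{r}{\approx}b$ iff for each nonempty finite $E$ there is a fissile $S\in\langle (Y^X_a)^{(\Delta E)}\rangle$ with $\langle\Xi^{\Delta E}(b)\rangle-S\in\langle (Y^X)^{(\Delta E)}\rangle^{(r+1)}_X$. *)

theory Defs
  imports "HOL-Analysis.Analysis" "HOL-Library.Poly_Mapping"
begin

text \<open>The free abelian group on a set W is modelled as the finitely supported
integer-valued functions on W, i.e. elements of type ('w =>0 int) with keys in W.\<close>

definition gen :: "'w \<Rightarrow> 'w \<Rightarrow>\<^sub>0 int" where
  "gen w = Poly_Mapping.single w 1"

definition fag :: "'w set \<Rightarrow> ('w \<Rightarrow>\<^sub>0 int) set" where
  "fag W = {V. Poly_Mapping.keys V \<subseteq> W}"

definition linext :: "('w \<Rightarrow> 'v) \<Rightarrow> ('w \<Rightarrow>\<^sub>0 int) \<Rightarrow> ('v \<Rightarrow>\<^sub>0 int)" where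
  "linext f V = (\<Sum>w\<in>Poly_Mapping.keys V. Poly_Mapping.single (f w) (Poly_Mapping.lookup V w))"

definition quotient_top :: "'a topology \<Rightarrow> ('a \<Rightarrow> 'b) \<Rightarrow> 'b topology" where
  "quotient_top X q = topology (\<lambda>S. S \<subseteq> q ` topspace X \<and> openin X {x \<in> topspace X. q x \<in> S})"

definition disj_union_top :: "'a topology \<Rightarrow> 'b topology \<Rightarrow> ('a + 'b) topology" where
  "disj_union_top X1 X2 = topology (\<lambda>S. S \<subseteq> Inl ` topspace X1 \<union> Inr ` topspace X2
      \<and> openin X1 (Inl -` S) \<and> openin X2 (Inr -` S))"

text \<open>Wedge of based spaces: the basepoint Inr x2 is identified with Inl x1;
the basepoint of the wedge is Inl x1.\<close>
definition wedge_proj :: "'a \<Rightarrow> 'b \<Rightarrow> 'a + 'b \<Rightarrow> 'a + 'b" where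
  "wedge_proj x1 x2 p = (case p of Inl x \<Rightarrow> Inl x | Inr x \<Rightarrow> if x = x2 then Inl x1 else Inr x)"

definition wedge_top :: "'a topology \<Rightarrow> 'a \<Rightarrow> 'b topology \<Rightarrow> 'b \<Rightarrow> ('a + 'b) topology" where
  "wedge_top X1 x1 X2 x2 = quotient_top (disj_union_top X1 X2) (wedge_proj x1 x2)"

definition wedge_map :: "'a topology \<Rightarrow> 'a \<Rightarrow> 'b topology \<Rightarrow> 'b \<Rightarrow> ('a \<Rightarrow> 'c) \<Rightarrow> ('b \<Rightarrow> 'c) \<Rightarrow> 'a + 'b \<Rightarrow> 'c" where
  "wedge_map X1 x1 X2 x2 a1 a2 =
     restrict (\<lambda>p. case p of Inl x \<Rightarrow> a1 x | Inr x \<Rightarrow> a2 x) (topspace (wedge_top X1 x1 X2 x2))"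

definition disc :: "nat \<Rightarrow> (nat \<Rightarrow> real) set" where
  "disc n = {v. (\<forall>i\<ge>n. v i = 0) \<and> (\<Sum>i<n. (v i)\<^sup>2) \<le> 1}"

definition odisc :: "nat \<Rightarrow> (nat \<Rightarrow> real) set" where
  "odisc n = {v. (\<forall>i\<ge>n. v i = 0) \<and> (\<Sum>i<n. (v i)\<^sup>2) < 1}"

definition bsphere :: "nat \<Rightarrow> (nat \<Rightarrow> real) set" where
  "bsphere n = {v. (\<forall>i\<ge>n. v i = 0) \<and> (\<Sum>i<n. (v i)\<^sup>2) = 1}"

text \<open>The closed n-disc with its Euclidean topology (finitely supported vectors in the
product topology carry the Euclidean topology).\<close>
definition disc_top :: "nat \<Rightarrow> (nat \<Rightarrow> real) topology" where
  "disc_top n = subtopology (powertop_real UNIV) (disc n)"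

text \<open>A CW complex: Hausdorff space partitioned into open cells C of dimension d C with
characteristic maps Phi C from the closed disc, a homeomorphism from the open disc onto C,
boundary sphere mapped into finitely many cells of lower dimension (closure finiteness),
and the weak topology determined by the characteristic maps.\<close>
definition cw_structure :: "'a topology \<Rightarrow> 'a set set \<Rightarrow> ('a set \<Rightarrow> nat) \<Rightarrow> ('a set \<Rightarrow> (nat \<Rightarrow> real) \<Rightarrow> 'a) \<Rightarrow> bool" where
  "cw_structure X \<C> d \<Phi> \<longleftrightarrow>
     pairwise disjnt \<C> \<and> \<Union>\<C> = topspace X \<and> {} \<notin> \<C> \<and>
     (\<forall>C\<in>\<C>. continuous_map (disc_top (d C)) X (\<Phi> C) \<and>
        homeomorphic_map (subtopology (disc_top (d C)) (odisc (d C))) (subtopology X C) (\<Phi> C) \<and>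
        (\<exists>\<D>. finite \<D> \<and> \<D> \<subseteq> \<C> \<and> (\<forall>D\<in>\<D>. d D < d C) \<and> \<Phi> C ` bsphere (d C) \<subseteq> \<Union>\<D>)) \<and>
     (\<forall>S. S \<subseteq> topspace X \<longrightarrow>
        (closedin X S \<longleftrightarrow> (\<forall>C\<in>\<C>. closedin (disc_top (d C)) {v \<in> disc (d C). \<Phi> C v \<in> S})))"

definition cellular_space :: "'a topology \<Rightarrow> 'a \<Rightarrow> bool" where
  "cellular_space X x0 \<longleftrightarrow> Hausdorff_space X \<and>
     (\<exists>\<C> d \<Phi>. cw_structure X \<C> d \<Phi> \<and> {x0} \<in> \<C> \<and> d {x0} = 0)"

text \<open>Based maps X -> Y; maps are represented extensionally (undefined off topspace X).\<close>
definition based_maps :: "'a topology \<Rightarrow> 'a \<Rightarrow> 'c topology \<Rightarrow> 'c \<Rightarrow> ('a \<Rightarrow> 'c) set" where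
  "based_maps X x0 Y y0 = {f. continuous_map X Y f \<and> f x0 = y0 \<and> f \<in> extensional (topspace X)}"

definition const_map :: "'a topology \<Rightarrow> 'c \<Rightarrow> 'a \<Rightarrow> 'c" where
  "const_map X y0 = restrict (\<lambda>_. y0) (topspace X)"

definition compact_open :: "'a topology \<Rightarrow> 'a \<Rightarrow> 'c topology \<Rightarrow> 'c \<Rightarrow> ('a \<Rightarrow> 'c) topology" where
  "compact_open X x0 Y y0 = topology_generated_by
     {{f \<in> based_maps X x0 Y y0. f ` K \<subseteq> U} | K U. compactin X K \<and> openin Y U}"

definition unbased_maps :: "'u topology \<Rightarrow> 'v topology \<Rightarrow> ('u \<Rightarrow> 'v) set" where
  "unbased_maps U V = {w. continuous_map U V w \<and> w \<in> extensional (topspace U)}"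

definition Xi :: "'u topology \<Rightarrow> 'v \<Rightarrow> 'u \<Rightarrow> 'v" where
  "Xi U v = restrict (\<lambda>_. v) (topspace U)"

definition restr :: "'a set \<Rightarrow> (('a \<Rightarrow> 'c) \<Rightarrow>\<^sub>0 int) \<Rightarrow> (('a \<Rightarrow> 'c) \<Rightarrow>\<^sub>0 int)" where
  "restr R V = linext (\<lambda>f. restrict f R) V"

definition Fsets :: "'a topology \<Rightarrow> 'a \<Rightarrow> nat \<Rightarrow> 'a set set" where
  "Fsets X x0 n = {R. finite R \<and> R \<subseteq> topspace X \<and> x0 \<in> R \<and> card R \<le> n + 1}"

text \<open><Y^X>^(s), for s \<ge> 1 (only used in that case).\<close>
definition filt :: "'a topology \<Rightarrow> 'a \<Rightarrow> 'c topology \<Rightarrow> 'c \<Rightarrow> nat \<Rightarrow> (('a \<Rightarrow> 'c) \<Rightarrow>\<^sub>0 int) set" where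
  "filt X x0 Y y0 s = {V \<in> fag (based_maps X x0 Y y0). \<forall>R\<in>Fsets X x0 (s - 1). restr R V = 0}"

text \<open>The face Delta F of the simplex Delta E (points are extensional functions on E).\<close>
definition face :: "'e set \<Rightarrow> 'e set \<Rightarrow> ('e \<Rightarrow> real) set" where
  "face E F = {t \<in> (\<Pi>\<^sub>E e\<in>E. UNIV). (\<forall>e\<in>E. 0 \<le> t e) \<and> (\<forall>e\<in>E - F. t e = 0) \<and> sum t E = 1}"

definition simplex_top :: "'e set \<Rightarrow> ('e \<Rightarrow> real) topology" where
  "simplex_top E = subtopology (product_topology (\<lambda>_. euclideanreal) E) (face E E)"

definition layouts :: "'e set \<Rightarrow> 'e set set set" where
  "layouts E = {A. (\<forall>F\<in>A. F \<subseteq> E \<and> F \<noteq> {}) \<and> pairwise disjnt A}"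

definition glue :: "'k set \<Rightarrow> ('k \<Rightarrow> 'u set) \<Rightarrow> ('k \<Rightarrow> 'u \<Rightarrow> 'v) \<Rightarrow> 'u \<Rightarrow> 'v" where
  "glue A U c = (\<lambda>x. if \<exists>k\<in>A. x \<in> U k then c (SOME k. k \<in> A \<and> x \<in> U k) x else undefined)"

definition boxprod :: "'k set \<Rightarrow> ('k \<Rightarrow> 'u set) \<Rightarrow> ('k \<Rightarrow> (('u \<Rightarrow> 'v) \<Rightarrow>\<^sub>0 int)) \<Rightarrow> (('u \<Rightarrow> 'v) \<Rightarrow>\<^sub>0 int)" where
  "boxprod A U V = (\<Sum>c\<in>(\<Pi>\<^sub>E k\<in>A. Poly_Mapping.keys (V k)).
      Poly_Mapping.single (glue A U c) (\<Prod>k\<in>A. Poly_Mapping.lookup (V k) (c k)))"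

definition fissile :: "'e set \<Rightarrow> ((('e \<Rightarrow> real) \<Rightarrow> 'v) \<Rightarrow>\<^sub>0 int) \<Rightarrow> bool" where
  "fissile E S \<longleftrightarrow> (\<forall>A\<in>layouts E.
      restr (\<Union>F\<in>A. face E F) S = boxprod A (face E) (\<lambda>F. restr (face E F) S))"

text \<open>Points of U \<wr> X: None is the collapsed U \<times> {x0}, Some (u,x) for x \<noteq> x0.\<close>
definition wr_proj :: "'a \<Rightarrow> 'u \<times> 'a \<Rightarrow> ('u \<times> 'a) option" where
  "wr_proj x0 p = (if snd p = x0 then None else Some p)"

definition wr_top :: "'u topology \<Rightarrow> 'a topology \<Rightarrow> 'a \<Rightarrow> ('u \<times> 'a) option topology" where
  "wr_top U X x0 = quotient_top (prod_topology U X) (wr_proj x0)"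

definition sharp :: "'u topology \<Rightarrow> 'a topology \<Rightarrow> 'a \<Rightarrow> 'c \<Rightarrow> ('u \<Rightarrow> 'a \<Rightarrow> 'c) \<Rightarrow> ('u \<times> 'a) option \<Rightarrow> 'c" where
  "sharp U X x0 y0 w = restrict (\<lambda>p. case p of None \<Rightarrow> y0 | Some (u, x) \<Rightarrow> w u x)
      (wr_proj x0 ` (topspace U \<times> topspace X))"

definition filtX :: "'u topology \<Rightarrow> 'a topology \<Rightarrow> 'a \<Rightarrow> 'c topology \<Rightarrow> 'c \<Rightarrow> nat
    \<Rightarrow> (('u \<Rightarrow> 'a \<Rightarrow> 'c) \<Rightarrow>\<^sub>0 int) set" where
  "filtX U X x0 Y y0 s = {V \<in> fag (unbased_maps U (compact_open X x0 Y y0)).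
      linext (sharp U X x0 y0) V \<in> filt (wr_top U X x0) None Y y0 s}"

text \<open>a \<approx>r b. Nonempty finite index sets E are taken as subsets of nat (no loss).\<close>
definition strongly_similar :: "'a topology \<Rightarrow> 'a \<Rightarrow> 'c topology \<Rightarrow> 'c \<Rightarrow> nat
    \<Rightarrow> ('a \<Rightarrow> 'c) \<Rightarrow> ('a \<Rightarrow> 'c) \<Rightarrow> bool" where
  "strongly_similar X x0 Y y0 r a b \<longleftrightarrow>
     (\<forall>E::nat set. finite E \<and> E \<noteq> {} \<longrightarrow>
       (\<exists>S. S \<in> fag (unbased_maps (simplex_top E)
                (subtopology (compact_open X x0 Y y0) (path_component_of_set (compact_open X x0 Y y0) a)))
          \<and> fissile E S
          \<and> gen (Xi (simplex_top E) b) - S \<in> filtX (simplex_top E) X x0 Y y0 (r + 1)))"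

end

theory Submission
  imports Defs
begin

abbreviation kk :: "('w \<Rightarrow>\<^sub>0 int) \<Rightarrow> 'w set" where "kk \<equiv> Poly_Mapping.keys"
abbreviation lk :: "('w \<Rightarrow>\<^sub>0 int) \<Rightarrow> 'w \<Rightarrow> int" where "lk \<equiv> Poly_Mapping.lookup"

lemma linext_superset:
  assumes "finite T" "kk V \<subseteq> T"
  shows "linext f V = (\<Sum>w\<in>T. Poly_Mapping.single (f w) (lk V w))"
  unfolding linext_def using assms
  by (intro sum.mono_neutral_left) (auto simp: in_keys_iff)

lemma linext_add: "linext f (V + W) = linext f V + linext f W"
proof -
  let ?T = "kk V \<union> kk W"
  have "linext f (V + W) = (\<Sum>w\<in>?T. Poly_Mapping.single (f w) (lk (V+W) w))"
    by (rule linext_superset) (auto simp: keys_add)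
  also have "\<dots> = (\<Sum>w\<in>?T. Poly_Mapping.single (f w) (lk V w)) + (\<Sum>w\<in>?T. Poly_Mapping.single (f w) (lk W w))"
    by (simp add: lookup_add single_add sum.distrib)
  also have "\<dots> = linext f V + linext f W"
    by (simp add: linext_superset[symmetric])
  finally show ?thesis .
qed

lemma linext_diff: "linext f (V - W) = linext f V - linext f W"
proof -
  let ?T = "kk V \<union> kk W"
  have "linext f (V - W) = (\<Sum>w\<in>?T. Poly_Mapping.single (f w) (lk (V-W) w))"
    by (rule linext_superset) (auto simp: keys_diff)
  also have "\<dots> = (\<Sum>w\<in>?T. Poly_Mapping.single (f w) (lk V w)) - (\<Sum>w\<in>?T. Poly_Mapping.single (f w) (lk W w))"
    by (simp add: lookup_minus single_diff sum_subtractf)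
  also have "\<dots> = linext f V - linext f W"
    by (simp add: linext_superset[symmetric])
  finally show ?thesis .
qed

lemma linext_zero[simp]: "linext f 0 = 0"
  by (simp add: linext_def)

lemma linext_single[simp]: "linext f (Poly_Mapping.single w c) = Poly_Mapping.single (f w) c"
  by (cases "c = 0") (simp_all add: linext_def)

lemma linext_sum: "linext f (sum F I) = (\<Sum>i\<in>I. linext f (F i))"
  by (induction I rule: infinite_finite_induct) (auto simp: linext_add)

lemma keys_linext: "kk (linext f V) \<subseteq> f ` kk V"
proof -
  have "kk (linext f V) \<subseteq> (\<Union>w\<in>kk V. kk (Poly_Mapping.single (f w) (lk V w)))"
    unfolding linext_def by (rule keys_sum)
  also have "\<dots> \<subseteq> f ` kk V" by auto
  finally show ?thesis .
qed

lemma linext_cong: "(\<And>w. w \<in> kk V \<Longrightarrow> f w = g w) \<Longrightarrow> linext f V = linext g V"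
  unfolding linext_def by (rule sum.cong) auto

lemma linext_comp: "linext g (linext f V) = linext (g \<circ> f) V"
  by (simp add: linext_def[of f] linext_sum) (simp add: linext_def)

definition bil :: "('a \<Rightarrow> 'b \<Rightarrow> 'c) \<Rightarrow> ('a \<Rightarrow>\<^sub>0 int) \<Rightarrow> ('b \<Rightarrow>\<^sub>0 int) \<Rightarrow> ('c \<Rightarrow>\<^sub>0 int)" where
  "bil \<phi> P Q = (\<Sum>f\<in>kk P. \<Sum>g\<in>kk Q. Poly_Mapping.single (\<phi> f g) (lk P f * lk Q g))"

lemma bil_superset:
  assumes "finite TP" "kk P \<subseteq> TP" "finite TQ" "kk Q \<subseteq> TQ"
  shows "bil \<phi> P Q = (\<Sum>f\<in>TP. \<Sum>g\<in>TQ. Poly_Mapping.single (\<phi> f g) (lk P f * lk Q g))"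
proof -
  have "bil \<phi> P Q = (\<Sum>f\<in>kk P. \<Sum>g\<in>TQ. Poly_Mapping.single (\<phi> f g) (lk P f * lk Q g))"
    unfolding bil_def using assms
    by (intro sum.cong refl sum.mono_neutral_left) (auto simp: in_keys_iff)
  also have "\<dots> = (\<Sum>f\<in>TP. \<Sum>g\<in>TQ. Poly_Mapping.single (\<phi> f g) (lk P f * lk Q g))"
    using assms by (intro sum.mono_neutral_left) (auto simp: in_keys_iff)
  finally show ?thesis .
qed

lemma bil_add1: "bil \<phi> (P + P') Q = bil \<phi> P Q + bil \<phi> P' Q"
proof -
  let ?T = "kk P \<union> kk P'"
  have "bil \<phi> (P + P') Q = (\<Sum>f\<in>?T. \<Sum>g\<in>kk Q. Poly_Mapping.single (\<phi> f g) (lk (P+P') f * lk Q g))"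
    by (rule bil_superset) (auto simp: keys_add)
  also have "\<dots> = (\<Sum>f\<in>?T. \<Sum>g\<in>kk Q. Poly_Mapping.single (\<phi> f g) (lk P f * lk Q g))
     + (\<Sum>f\<in>?T. \<Sum>g\<in>kk Q. Poly_Mapping.single (\<phi> f g) (lk P' f * lk Q g))"
    by (simp add: lookup_add single_add sum.distrib distrib_right)
  also have "\<dots> = bil \<phi> P Q + bil \<phi> P' Q"
    by (simp add: bil_superset[symmetric])
  finally show ?thesis .
qed

lemma bil_add2: "bil \<phi> P (Q + Q') = bil \<phi> P Q + bil \<phi> P Q'"
proof -
  let ?T = "kk Q \<union> kk Q'"
  have "bil \<phi> P (Q + Q') = (\<Sum>f\<in>kk P. \<Sum>g\<in>?T. Poly_Mapping.single (\<phi> f g) (lk P f * lk (Q+Q') g))"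
    by (rule bil_superset) (auto simp: keys_add)
  also have "\<dots> = (\<Sum>f\<in>kk P. \<Sum>g\<in>?T. Poly_Mapping.single (\<phi> f g) (lk P f * lk Q g))
     + (\<Sum>f\<in>kk P. \<Sum>g\<in>?T. Poly_Mapping.single (\<phi> f g) (lk P f * lk Q' g))"
    by (simp add: lookup_add single_add sum.distrib distrib_left)
  also have "\<dots> = bil \<phi> P Q + bil \<phi> P Q'"
    by (simp add: bil_superset[symmetric])
  finally show ?thesis .
qed

lemma bil_diff1: "bil \<phi> (P - P') Q = bil \<phi> P Q - bil \<phi> P' Q"
  by (metis add_diff_cancel bil_add1 diff_add_cancel)

lemma bil_diff2: "bil \<phi> P (Q - Q') = bil \<phi> P Q - bil \<phi> P Q'"
  by (metis add_diff_cancel bil_add2 diff_add_cancel)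

lemma bil_zero1[simp]: "bil \<phi> 0 Q = 0" by (simp add: bil_def)
lemma bil_zero2[simp]: "bil \<phi> P 0 = 0" by (simp add: bil_def)

lemma bil_single[simp]: "bil \<phi> (Poly_Mapping.single a p) (Poly_Mapping.single b q) = Poly_Mapping.single (\<phi> a b) (p * q)"
  by (cases "p = 0"; cases "q = 0") (simp_all add: bil_def)

lemma bil_sum1: "bil \<phi> (sum F I) Q = (\<Sum>i\<in>I. bil \<phi> (F i) Q)"
  by (induction I rule: infinite_finite_induct) (auto simp: bil_add1)

lemma bil_sum2: "bil \<phi> P (sum F I) = (\<Sum>i\<in>I. bil \<phi> P (F i))"
  by (induction I rule: infinite_finite_induct) (auto simp: bil_add2)

lemma bil_sum_single:
  "bil \<phi> (\<Sum>i\<in>I. Poly_Mapping.single (a i) (p i)) (\<Sum>j\<in>J. Poly_Mapping.single (b j) (q j))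
   = (\<Sum>i\<in>I. \<Sum>j\<in>J. Poly_Mapping.single (\<phi> (a i) (b j)) (p i * q j))"
  by (simp add: bil_sum1 bil_sum2 sum.swap[of _ J])

lemma keys_bil: "kk (bil \<phi> P Q) \<subseteq> (\<lambda>(f,g). \<phi> f g) ` (kk P \<times> kk Q)"
proof -
  have "kk (bil \<phi> P Q) \<subseteq> (\<Union>f\<in>kk P. kk (\<Sum>g\<in>kk Q. Poly_Mapping.single (\<phi> f g) (lk P f * lk Q g)))"
    unfolding bil_def by (rule keys_sum)
  also have "\<dots> \<subseteq> (\<Union>f\<in>kk P. \<Union>g\<in>kk Q. kk (Poly_Mapping.single (\<phi> f g) (lk P f * lk Q g)))"
    by (intro UN_mono subset_refl keys_sum)
  also have "\<dots> \<subseteq> (\<lambda>(f,g). \<phi> f g) ` (kk P \<times> kk Q)"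
    by auto
  finally show ?thesis .
qed

lemma linext_bil:
  assumes "\<And>f g. f \<in> kk P \<Longrightarrow> g \<in> kk Q \<Longrightarrow> h (\<phi> f g) = \<psi> (h1 f) (h2 g)"
  shows "linext h (bil \<phi> P Q) = bil \<psi> (linext h1 P) (linext h2 Q)"
proof -
  have "linext h (bil \<phi> P Q) = (\<Sum>f\<in>kk P. \<Sum>g\<in>kk Q. Poly_Mapping.single (h (\<phi> f g)) (lk P f * lk Q g))"
    unfolding bil_def by (simp add: linext_sum)
  also have "\<dots> = (\<Sum>f\<in>kk P. \<Sum>g\<in>kk Q. Poly_Mapping.single (\<psi> (h1 f) (h2 g)) (lk P f * lk Q g))"
    using assms by (intro sum.cong refl) auto
  also have "\<dots> = bil \<psi> (linext h1 P) (linext h2 Q)"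
    unfolding linext_def[of h1] linext_def[of h2] by (rule bil_sum_single[symmetric])
  finally show ?thesis .
qed

lemma single_sum: "Poly_Mapping.single k (sum f I) = (\<Sum>i\<in>I. Poly_Mapping.single k (f i))"
  by (induction I rule: infinite_finite_induct) (auto simp: single_add)

lemma glue_cong: "(\<And>k. k \<in> A \<Longrightarrow> d k = d' k) \<Longrightarrow> glue A U d = glue A U d'"
  unfolding glue_def by (rule ext) (smt (verit, best) someI_ex)

lemma boxprod_superset:
  assumes "finite A" "\<And>k. k \<in> A \<Longrightarrow> finite (T k)" "\<And>k. k \<in> A \<Longrightarrow> kk (V k) \<subseteq> T k"
  shows "boxprod A U V = (\<Sum>d\<in>PiE A T. Poly_Mapping.single (glue A U d) (\<Prod>k\<in>A. lk (V k) (d k)))"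
  unfolding boxprod_def
proof (rule sum.mono_neutral_left)
  show "finite (PiE A T)" using assms by (simp add: finite_PiE)
  show "PiE A (\<lambda>k. kk (V k)) \<subseteq> PiE A T" using assms by (auto simp: PiE_iff)
  show "\<forall>d\<in>PiE A T - PiE A (\<lambda>k. kk (V k)).
     Poly_Mapping.single (glue A U d) (\<Prod>k\<in>A. lk (V k) (d k)) = 0"
  proof
    fix d assume d: "d \<in> PiE A T - PiE A (\<lambda>k. kk (V k))"
    then obtain k where "k \<in> A" "d k \<notin> kk (V k)" by (auto simp: PiE_iff)
    then have "(\<Prod>k\<in>A. lk (V k) (d k)) = 0"
      using assms(1) by (intro prod_zero) (auto simp: in_keys_iff)
    then show "Poly_Mapping.single (glue A U d) (\<Prod>k\<in>A. lk (V k) (d k)) = 0" by simp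
  qed
qed

lemma boxprod_sum:
  assumes A: "finite A" and I: "\<And>k. k \<in> A \<Longrightarrow> finite (I k)"
    and V: "\<And>k. k \<in> A \<Longrightarrow> V k = (\<Sum>i\<in>I k. Poly_Mapping.single (h k i) (p k i))"
  shows "boxprod A U V = (\<Sum>c\<in>PiE A I. Poly_Mapping.single (glue A U (\<lambda>k. h k (c k))) (\<Prod>k\<in>A. p k (c k)))"
proof -
  define T where "T k = h k ` I k" for k
  define fib where "fib d k = {i \<in> I k. h k i = d k}" for d k
  have keysV: "kk (V k) \<subseteq> T k" if "k \<in> A" for k
  proof -
    have "kk (V k) \<subseteq> (\<Union>i\<in>I k. kk (Poly_Mapping.single (h k i) (p k i)))"
      unfolding V[OF that] by (rule keys_sum)
    also have "\<dots> \<subseteq> T k" by (auto simp: T_def)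
    finally show ?thesis .
  qed
  have finT: "finite (T k)" if "k \<in> A" for k using I[OF that] by (simp add: T_def)
  have "boxprod A U V = (\<Sum>d\<in>PiE A T. Poly_Mapping.single (glue A U d) (\<Prod>k\<in>A. lk (V k) (d k)))"
    by (rule boxprod_superset[OF A finT keysV])
  also have "\<dots> = (\<Sum>d\<in>PiE A T. Poly_Mapping.single (glue A U d) (\<Prod>k\<in>A. \<Sum>i\<in>fib d k. p k i))"
  proof (intro sum.cong refl arg_cong[where f="Poly_Mapping.single _"] prod.cong)
    fix d k assume "k \<in> A"
    show "lk (V k) (d k) = (\<Sum>i\<in>fib d k. p k i)"
      unfolding V[OF \<open>k \<in> A\<close>] lookup_sum fib_def lookup_single
      using I[OF \<open>k \<in> A\<close>] by (simp add: sum.inter_filter[symmetric] when_def)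
  qed
  also have "\<dots> = (\<Sum>d\<in>PiE A T. \<Sum>c\<in>PiE A (fib d). Poly_Mapping.single (glue A U (\<lambda>k. h k (c k))) (\<Prod>k\<in>A. p k (c k)))"
  proof (intro sum.cong refl)
    fix d assume d: "d \<in> PiE A T"
    have "(\<Prod>k\<in>A. \<Sum>i\<in>fib d k. p k i) = (\<Sum>c\<in>PiE A (fib d). \<Prod>k\<in>A. p k (c k))"
      using A I by (intro prod_sum_PiE) (auto simp: fib_def)
    then have "Poly_Mapping.single (glue A U d) (\<Prod>k\<in>A. \<Sum>i\<in>fib d k. p k i)
        = (\<Sum>c\<in>PiE A (fib d). Poly_Mapping.single (glue A U d) (\<Prod>k\<in>A. p k (c k)))"
      by (simp add: single_sum)
    also have "\<dots> = (\<Sum>c\<in>PiE A (fib d). Poly_Mapping.single (glue A U (\<lambda>k. h k (c k))) (\<Prod>k\<in>A. p k (c k)))"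
      by (intro sum.cong refl arg_cong2[where f=Poly_Mapping.single] glue_cong) (auto simp: fib_def PiE_iff)
    finally show "Poly_Mapping.single (glue A U d) (\<Prod>k\<in>A. \<Sum>i\<in>fib d k. p k i) = \<dots>" .
  qed
  also have "\<dots> = (\<Sum>c\<in>PiE A I. Poly_Mapping.single (glue A U (\<lambda>k. h k (c k))) (\<Prod>k\<in>A. p k (c k)))"
  proof -
    let ?g = "\<lambda>c. restrict (\<lambda>k. h k (c k)) A"
    have fin: "finite (PiE A I)" "finite (PiE A T)" using A I finT by (auto simp: finite_PiE)
    have sub: "?g ` PiE A I \<subseteq> PiE A T" by (auto simp: T_def PiE_iff)
    have eq: "{c. c \<in> PiE A I \<and> ?g c = d} = PiE A (fib d)" if "d \<in> PiE A T" for d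
      using that by (auto simp: PiE_iff fib_def extensional_def fun_eq_iff)
    show ?thesis
      using sum.group[OF fin sub, of "\<lambda>c. Poly_Mapping.single (glue A U (\<lambda>k. h k (c k))) (\<Prod>k\<in>A. p k (c k))"]
      by (simp add: eq)
  qed
  finally show ?thesis .
qed

lemma boxprod_bil:
  assumes A: "finite A"
    and G: "\<And>c1 c2. glue A U (\<lambda>k. \<phi> k (c1 k) (c2 k)) = \<psi> (glue A U c1) (glue A U c2)"
  shows "boxprod A U (\<lambda>k. bil (\<phi> k) (P k) (Q k)) = bil \<psi> (boxprod A U P) (boxprod A U Q)"
proof -
  let ?I = "\<lambda>k. kk (P k) \<times> kk (Q k)"
  have "boxprod A U (\<lambda>k. bil (\<phi> k) (P k) (Q k)) =
     (\<Sum>c\<in>PiE A ?I. Poly_Mapping.single (glue A U (\<lambda>k. \<phi> k (fst (c k)) (snd (c k))))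
        (\<Prod>k\<in>A. lk (P k) (fst (c k)) * lk (Q k) (snd (c k))))"
  proof (rule boxprod_sum[OF A])
    fix k show "finite (?I k)" by simp
    show "bil (\<phi> k) (P k) (Q k) = (\<Sum>pq\<in>?I k. Poly_Mapping.single (\<phi> k (fst pq) (snd pq)) (lk (P k) (fst pq) * lk (Q k) (snd pq)))"
      unfolding bil_def by (simp add: sum.cartesian_product case_prod_beta)
  qed
  also have "\<dots> = (\<Sum>c\<in>PiE A ?I. Poly_Mapping.single (\<psi> (glue A U (restrict (\<lambda>k. fst (c k)) A)) (glue A U (restrict (\<lambda>k. snd (c k)) A)))
        ((\<Prod>k\<in>A. lk (P k) (restrict (\<lambda>k. fst (c k)) A k)) * (\<Prod>k\<in>A. lk (Q k) (restrict (\<lambda>k. snd (c k)) A k))))"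
  proof (intro sum.cong refl arg_cong2[where f=Poly_Mapping.single])
    fix c
    show "glue A U (\<lambda>k. \<phi> k (fst (c k)) (snd (c k))) =
         \<psi> (glue A U (restrict (\<lambda>k. fst (c k)) A)) (glue A U (restrict (\<lambda>k. snd (c k)) A))"
      by (subst G[symmetric]) (rule glue_cong, simp)
    show "(\<Prod>k\<in>A. lk (P k) (fst (c k)) * lk (Q k) (snd (c k))) =
        (\<Prod>k\<in>A. lk (P k) (restrict (\<lambda>k. fst (c k)) A k)) * (\<Prod>k\<in>A. lk (Q k) (restrict (\<lambda>k. snd (c k)) A k))"
      by (simp add: prod.distrib)
  qed
  also have "\<dots> = (\<Sum>cc\<in>PiE A (\<lambda>k. kk (P k)) \<times> PiE A (\<lambda>k. kk (Q k)).
       Poly_Mapping.single (\<psi> (glue A U (fst cc)) (glue A U (snd cc)))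
        ((\<Prod>k\<in>A. lk (P k) (fst cc k)) * (\<Prod>k\<in>A. lk (Q k) (snd cc k))))"
  proof -
    let ?H = "\<lambda>c. (restrict (\<lambda>k. fst (c k)) A, restrict (\<lambda>k. snd (c k)) A)"
    let ?G = "\<lambda>cc. Poly_Mapping.single (\<psi> (glue A U (fst cc)) (glue A U (snd cc)))
        ((\<Prod>k\<in>A. lk (P k) (fst cc k)) * (\<Prod>k\<in>A. lk (Q k) (snd cc k)))"
    have bij: "bij_betw ?H (PiE A ?I) (PiE A (\<lambda>k. kk (P k)) \<times> PiE A (\<lambda>k. kk (Q k)))"
    proof (rule bij_betw_byWitness[where f'="\<lambda>cc. restrict (\<lambda>k. (fst cc k, snd cc k)) A"])
      show "\<forall>c\<in>PiE A ?I. restrict (\<lambda>k. (fst (?H c) k, snd (?H c) k)) A = c"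
        by (auto simp: PiE_iff extensional_def fun_eq_iff)
      show "\<forall>cc\<in>PiE A (\<lambda>k. kk (P k)) \<times> PiE A (\<lambda>k. kk (Q k)).
        ?H (restrict (\<lambda>k. (fst cc k, snd cc k)) A) = cc"
        by (auto simp: PiE_iff extensional_def fun_eq_iff)
    qed (auto simp: PiE_iff mem_Times_iff)
    show ?thesis using sum.reindex_bij_betw[OF bij, of ?G] by simp
  qed
  also have "\<dots> = (\<Sum>c1\<in>PiE A (\<lambda>k. kk (P k)). \<Sum>c2\<in>PiE A (\<lambda>k. kk (Q k)).
       Poly_Mapping.single (\<psi> (glue A U c1) (glue A U c2))
        ((\<Prod>k\<in>A. lk (P k) (c1 k)) * (\<Prod>k\<in>A. lk (Q k) (c2 k))))"
    by (simp add: sum.cartesian_product case_prod_beta)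
  also have "\<dots> = bil \<psi> (boxprod A U P) (boxprod A U Q)"
    unfolding boxprod_def by (rule bil_sum_single[symmetric])
  finally show ?thesis .
qed

section \<open>Quotient topology\<close>

lemma istopology_quotient:
  "istopology (\<lambda>S. S \<subseteq> q ` topspace X \<and> openin X {x \<in> topspace X. q x \<in> S})"
proof -
  have 1: "openin X {x \<in> topspace X. q x \<in> S \<inter> T}"
    if "openin X {x \<in> topspace X. q x \<in> S}" "openin X {x \<in> topspace X. q x \<in> T}" for S T
  proof -
    have "{x \<in> topspace X. q x \<in> S \<inter> T} = {x \<in> topspace X. q x \<in> S} \<inter> {x \<in> topspace X. q x \<in> T}" by auto
    then show ?thesis using that by auto
  qed
  have 2: "openin X {x \<in> topspace X. q x \<in> \<Union>K}"
    if "\<forall>S\<in>K. openin X {x \<in> topspace X. q x \<in> S}" for K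
  proof -
    have "{x \<in> topspace X. q x \<in> \<Union>K} = (\<Union>S\<in>K. {x \<in> topspace X. q x \<in> S})" by auto
    then show ?thesis using that by auto
  qed
  show ?thesis unfolding istopology_def using 1 2 by blast
qed

lemma openin_quotient_top:
  "openin (quotient_top X q) S \<longleftrightarrow> S \<subseteq> q ` topspace X \<and> openin X {x \<in> topspace X. q x \<in> S}"
  unfolding quotient_top_def topology_inverse'[OF istopology_quotient] by simp

lemma topspace_quotient_top: "topspace (quotient_top X q) = q ` topspace X"
proof -
  have "openin (quotient_top X q) (q ` topspace X)"
  proof -
    have "{x \<in> topspace X. q x \<in> q ` topspace X} = topspace X" by auto
    then show ?thesis unfolding openin_quotient_top by simp
  qed
  then have "q ` topspace X \<subseteq> topspace (quotient_top X q)" by (rule openin_subset)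
  moreover have "topspace (quotient_top X q) \<subseteq> q ` topspace X"
    using openin_topspace[of "quotient_top X q"] unfolding openin_quotient_top by (elim conjE)
  ultimately show ?thesis by blast
qed

lemma quotient_map_quotient_top: "quotient_map X (quotient_top X q) q"
  unfolding quotient_map_def topspace_quotient_top openin_quotient_top by auto

lemma continuous_map_from_quotient_top:
  "continuous_map X Z (g \<circ> q) \<Longrightarrow> continuous_map (quotient_top X q) Z g"
  by (rule continuous_compose_quotient_map[OF quotient_map_quotient_top])

lemma continuous_map_quotient_top: "continuous_map X (quotient_top X q) q"
  by (rule quotient_imp_continuous_map[OF quotient_map_quotient_top])

section \<open>Disjoint union\<close>

lemma istopology_disj_union:
  "istopology (\<lambda>S. S \<subseteq> Inl ` topspace X1 \<union> Inr ` topspace X2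
      \<and> openin X1 (Inl -` S) \<and> openin X2 (Inr -` S))"
  unfolding istopology_def
proof (rule conjI; intro allI impI; (elim conjE)?)
  fix S T :: "('a+'b) set"
  assume "S \<subseteq> Inl ` topspace X1 \<union> Inr ` topspace X2" "openin X1 (Inl -` S)" "openin X2 (Inr -` S)"
    "T \<subseteq> Inl ` topspace X1 \<union> Inr ` topspace X2" "openin X1 (Inl -` T)" "openin X2 (Inr -` T)"
  then show "S \<inter> T \<subseteq> Inl ` topspace X1 \<union> Inr ` topspace X2 \<and> openin X1 (Inl -` (S \<inter> T)) \<and> openin X2 (Inr -` (S \<inter> T))"
    unfolding vimage_Int by (intro conjI openin_Int) blast+
next
  fix K :: "('a+'b) set set"
  assume K: "\<forall>S\<in>K. S \<subseteq> Inl ` topspace X1 \<union> Inr ` topspace X2 \<and> openin X1 (Inl -` S) \<and> openin X2 (Inr -` S)"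
  have "Inl -` \<Union>K = (\<Union>S\<in>K. Inl -` S)" "Inr -` \<Union>K = (\<Union>S\<in>K. Inr -` S)" by auto
  moreover have "openin X1 (\<Union>S\<in>K. Inl -` S)" "openin X2 (\<Union>S\<in>K. Inr -` S)"
    using K by (intro openin_Union; blast)+
  moreover have "\<Union>K \<subseteq> Inl ` topspace X1 \<union> Inr ` topspace X2" using K by blast
  ultimately show "\<Union>K \<subseteq> Inl ` topspace X1 \<union> Inr ` topspace X2 \<and> openin X1 (Inl -` \<Union>K) \<and> openin X2 (Inr -` \<Union>K)"
    by simp
qed

lemma openin_disj_union_top:
  "openin (disj_union_top X1 X2) S \<longleftrightarrow> S \<subseteq> Inl ` topspace X1 \<union> Inr ` topspace X2
      \<and> openin X1 (Inl -` S) \<and> openin X2 (Inr -` S)"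
  unfolding disj_union_top_def topology_inverse'[OF istopology_disj_union] by simp

lemma topspace_disj_union_top: "topspace (disj_union_top X1 X2) = Inl ` topspace X1 \<union> Inr ` topspace X2"
proof -
  have "Inl -` (Inl ` topspace X1 \<union> Inr ` topspace X2) = topspace X1"
       "Inr -` (Inl ` topspace X1 \<union> Inr ` topspace X2) = topspace X2" by auto
  then have "openin (disj_union_top X1 X2) (Inl ` topspace X1 \<union> Inr ` topspace X2)"
    unfolding openin_disj_union_top by auto
  then have "Inl ` topspace X1 \<union> Inr ` topspace X2 \<subseteq> topspace (disj_union_top X1 X2)" by (rule openin_subset)
  moreover have "topspace (disj_union_top X1 X2) \<subseteq> Inl ` topspace X1 \<union> Inr ` topspace X2"
    using openin_topspace[of "disj_union_top X1 X2"] unfolding openin_disj_union_top by (elim conjE)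
  ultimately show ?thesis by blast
qed

lemma continuous_map_from_disj_union:
  assumes "continuous_map X1 Z (g \<circ> Inl)" "continuous_map X2 Z (g \<circ> Inr)"
  shows "continuous_map (disj_union_top X1 X2) Z g"
  unfolding continuous_map_openin_preimage_eq
proof (intro conjI allI impI)
  show "g \<in> topspace (disj_union_top X1 X2) \<rightarrow> topspace Z"
  proof -
    have "(g \<circ> Inl) ` topspace X1 \<subseteq> topspace Z" "(g \<circ> Inr) ` topspace X2 \<subseteq> topspace Z"
      by (rule continuous_map_image_subset_topspace[OF assms(1)], rule continuous_map_image_subset_topspace[OF assms(2)])
    then show ?thesis unfolding topspace_disj_union_top by (auto simp: image_subset_iff)
  qed
  fix V assume V: "openin Z V"
  have e1: "Inl -` (topspace (disj_union_top X1 X2) \<inter> g -` V) = {x \<in> topspace X1. (g \<circ> Inl) x \<in> V}"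
    unfolding topspace_disj_union_top by auto
  have e2: "Inr -` (topspace (disj_union_top X1 X2) \<inter> g -` V) = {x \<in> topspace X2. (g \<circ> Inr) x \<in> V}"
    unfolding topspace_disj_union_top by auto
  show "openin (disj_union_top X1 X2) (topspace (disj_union_top X1 X2) \<inter> g -` V)"
    unfolding openin_disj_union_top
  proof (intro conjI)
    show "topspace (disj_union_top X1 X2) \<inter> g -` V \<subseteq> Inl ` topspace X1 \<union> Inr ` topspace X2"
      by (metis Int_lower1 topspace_disj_union_top)
    show "openin X1 (Inl -` (topspace (disj_union_top X1 X2) \<inter> g -` V))"
      unfolding e1 by (rule openin_continuous_map_preimage[OF assms(1) V])
    show "openin X2 (Inr -` (topspace (disj_union_top X1 X2) \<inter> g -` V))"
      unfolding e2 by (rule openin_continuous_map_preimage[OF assms(2) V])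
  qed
qed

section \<open>Wedge\<close>

lemma wedge_proj_Inl[simp]: "wedge_proj x1 x2 (Inl x) = Inl x"
  by (simp add: wedge_proj_def)
lemma wedge_proj_Inr[simp]: "wedge_proj x1 x2 (Inr x) = (if x = x2 then Inl x1 else Inr x)"
  by (simp add: wedge_proj_def)

lemma topspace_wedge:
  assumes "x1 \<in> topspace X1"
  shows "topspace (wedge_top X1 x1 X2 x2) = Inl ` topspace X1 \<union> Inr ` (topspace X2 - {x2})"
proof -
  have "topspace (wedge_top X1 x1 X2 x2) = wedge_proj x1 x2 ` (Inl ` topspace X1 \<union> Inr ` topspace X2)"
    unfolding wedge_top_def topspace_quotient_top topspace_disj_union_top ..
  also have "\<dots> = Inl ` topspace X1 \<union> Inr ` (topspace X2 - {x2})"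
  proof
    show "wedge_proj x1 x2 ` (Inl ` topspace X1 \<union> Inr ` topspace X2) \<subseteq> Inl ` topspace X1 \<union> Inr ` (topspace X2 - {x2})"
      using assms by auto
    show "Inl ` topspace X1 \<union> Inr ` (topspace X2 - {x2}) \<subseteq> wedge_proj x1 x2 ` (Inl ` topspace X1 \<union> Inr ` topspace X2)"
    proof
      fix p assume "p \<in> Inl ` topspace X1 \<union> Inr ` (topspace X2 - {x2})"
      then show "p \<in> wedge_proj x1 x2 ` (Inl ` topspace X1 \<union> Inr ` topspace X2)"
      proof
        assume "p \<in> Inl ` topspace X1"
        then obtain x where "x \<in> topspace X1" "p = Inl x" by auto
        then show ?thesis by (intro image_eqI[where x="Inl x"]) auto
      next
        assume "p \<in> Inr ` (topspace X2 - {x2})"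
        then obtain x where "x \<in> topspace X2" "x \<noteq> x2" "p = Inr x" by auto
        then show ?thesis by (intro image_eqI[where x="Inr x"]) auto
      qed
    qed
  qed
  finally show ?thesis .
qed

lemma continuous_map_rho1:
  assumes "x1 \<in> topspace X1"
  shows "continuous_map (wedge_top X1 x1 X2 x2) X1 (case_sum (\<lambda>x. x) (\<lambda>_. x1))"
  unfolding wedge_top_def
proof (rule continuous_map_from_quotient_top, rule continuous_map_from_disj_union)
  have "(case_sum (\<lambda>x. x) (\<lambda>_. x1) \<circ> wedge_proj x1 x2) \<circ> Inl = (\<lambda>x. x)" by (auto simp: fun_eq_iff)
  then show "continuous_map X1 X1 ((case_sum (\<lambda>x. x) (\<lambda>_. x1) \<circ> wedge_proj x1 x2) \<circ> Inl)"
    by (simp add: continuous_map_id[unfolded id_def])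
  have "(case_sum (\<lambda>x. x) (\<lambda>_. x1) \<circ> wedge_proj x1 x2) \<circ> Inr = (\<lambda>_. x1)" by (auto simp: fun_eq_iff)
  then show "continuous_map X2 X1 ((case_sum (\<lambda>x. x) (\<lambda>_. x1) \<circ> wedge_proj x1 x2) \<circ> Inr)"
    using assms by simp
qed

lemma continuous_map_rho2:
  assumes "x2 \<in> topspace X2"
  shows "continuous_map (wedge_top X1 x1 X2 x2) X2 (case_sum (\<lambda>_. x2) (\<lambda>x. x))"
  unfolding wedge_top_def
proof (rule continuous_map_from_quotient_top, rule continuous_map_from_disj_union)
  have "(case_sum (\<lambda>_. x2) (\<lambda>x. x) \<circ> wedge_proj x1 x2) \<circ> Inr = (\<lambda>x. x)" by (auto simp: fun_eq_iff)
  then show "continuous_map X2 X2 ((case_sum (\<lambda>_. x2) (\<lambda>x. x) \<circ> wedge_proj x1 x2) \<circ> Inr)"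
    by (simp add: continuous_map_id[unfolded id_def])
  have "(case_sum (\<lambda>_. x2) (\<lambda>x. x) \<circ> wedge_proj x1 x2) \<circ> Inl = (\<lambda>_. x2)" by (auto simp: fun_eq_iff)
  then show "continuous_map X1 X2 ((case_sum (\<lambda>_. x2) (\<lambda>x. x) \<circ> wedge_proj x1 x2) \<circ> Inl)"
    using assms by simp
qed

lemma closedin_wedge_left:
  assumes "x1 \<in> topspace X1" "closedin X2 {x2}"
  shows "closedin (wedge_top X1 x1 X2 x2) (Inl ` topspace X1)"
proof -
  have ts: "topspace (wedge_top X1 x1 X2 x2) - Inl ` topspace X1 = Inr ` (topspace X2 - {x2})"
    unfolding topspace_wedge[OF assms(1)] by auto
  have pre: "{z \<in> topspace (disj_union_top X1 X2). wedge_proj x1 x2 z \<in> Inr ` (topspace X2 - {x2})}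
     = Inr ` (topspace X2 - {x2})"
    apply (rule set_eqI)
    subgoal for z by (cases z) (auto simp: topspace_disj_union_top)
    done
  have o2: "openin X2 (topspace X2 - {x2})" using assms(2) by (simp add: closedin_def)
  have "openin (disj_union_top X1 X2) (Inr ` (topspace X2 - {x2}))"
  proof -
    have e: "Inl -` (Inr ` (topspace X2 - {x2})) = ({}::'a set)" "Inr -` (Inr ` (topspace X2 - {x2})) = topspace X2 - {x2}" by auto
    show ?thesis unfolding openin_disj_union_top e using o2 by auto
  qed
  then have "openin (wedge_top X1 x1 X2 x2) (Inr ` (topspace X2 - {x2}))"
  proof -
    have tq: "topspace (wedge_top X1 x1 X2 x2) = wedge_proj x1 x2 ` topspace (disj_union_top X1 X2)"
      unfolding wedge_top_def topspace_quotient_top ..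
    have "Inr ` (topspace X2 - {x2}) \<subseteq> wedge_proj x1 x2 ` topspace (disj_union_top X1 X2)"
      unfolding tq[symmetric] topspace_wedge[OF assms(1)] by auto
    then show ?thesis unfolding wedge_top_def openin_quotient_top pre using \<open>openin (disj_union_top X1 X2) (Inr ` (topspace X2 - {x2}))\<close> by simp
  qed
  moreover have "Inl ` topspace X1 \<subseteq> topspace (wedge_top X1 x1 X2 x2)"
    unfolding topspace_wedge[OF assms(1)] by auto
  ultimately show ?thesis unfolding closedin_def ts by simp
qed

lemma closedin_wedge_right:
  assumes "x1 \<in> topspace X1" "closedin X1 {x1}"
  shows "closedin (wedge_top X1 x1 X2 x2) (insert (Inl x1) (Inr ` (topspace X2 - {x2})))"
proof -
  have ts: "topspace (wedge_top X1 x1 X2 x2) - insert (Inl x1) (Inr ` (topspace X2 - {x2})) = Inl ` (topspace X1 - {x1})"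
    unfolding topspace_wedge[OF assms(1)] by auto
  have pre: "{z \<in> topspace (disj_union_top X1 X2). wedge_proj x1 x2 z \<in> Inl ` (topspace X1 - {x1})}
     = Inl ` (topspace X1 - {x1})"
    apply (rule set_eqI)
    subgoal for z by (cases z) (auto simp: topspace_disj_union_top)
    done
  have o1: "openin X1 (topspace X1 - {x1})" using assms(2) by (simp add: closedin_def)
  have "openin (disj_union_top X1 X2) (Inl ` (topspace X1 - {x1}))"
  proof -
    have e: "Inr -` (Inl ` (topspace X1 - {x1})) = ({}::'b set)" "Inl -` (Inl ` (topspace X1 - {x1})) = topspace X1 - {x1}" by auto
    show ?thesis unfolding openin_disj_union_top e using o1 by auto
  qed
  then have "openin (wedge_top X1 x1 X2 x2) (Inl ` (topspace X1 - {x1}))"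
  proof -
    have tq: "topspace (wedge_top X1 x1 X2 x2) = wedge_proj x1 x2 ` topspace (disj_union_top X1 X2)"
      unfolding wedge_top_def topspace_quotient_top ..
    have "Inl ` (topspace X1 - {x1}) \<subseteq> wedge_proj x1 x2 ` topspace (disj_union_top X1 X2)"
      unfolding tq[symmetric] topspace_wedge[OF assms(1)] by auto
    then show ?thesis unfolding wedge_top_def openin_quotient_top pre using \<open>openin (disj_union_top X1 X2) (Inl ` (topspace X1 - {x1}))\<close> by simp
  qed
  moreover have "insert (Inl x1) (Inr ` (topspace X2 - {x2})) \<subseteq> topspace (wedge_top X1 x1 X2 x2)"
    unfolding topspace_wedge[OF assms(1)] using assms by auto
  ultimately show ?thesis unfolding closedin_def ts by simp
qed

section \<open>Compact-open\<close>

lemma Union_CO_sub: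
  "\<Union>{{f \<in> based_maps X x0 Y y0. f ` K \<subseteq> U} | K U. compactin X K \<and> openin Y U} = based_maps X x0 Y y0"
proof
  show "based_maps X x0 Y y0 \<subseteq> \<Union>{{f \<in> based_maps X x0 Y y0. f ` K \<subseteq> U} | K U. compactin X K \<and> openin Y U}"
  proof
    fix f assume "f \<in> based_maps X x0 Y y0"
    then have "f \<in> {f \<in> based_maps X x0 Y y0. f ` {} \<subseteq> topspace Y}" by simp
    moreover have "compactin X {}" "openin Y (topspace Y)" by auto
    ultimately show "f \<in> \<Union>{{f \<in> based_maps X x0 Y y0. f ` K \<subseteq> U} | K U. compactin X K \<and> openin Y U}"
      by blast
  qed
qed blast

lemma topspace_compact_open: "topspace (compact_open X x0 Y y0) = based_maps X x0 Y y0"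
  unfolding compact_open_def topology_generated_by_topspace Union_CO_sub ..

lemma openin_compact_open_sub:
  "compactin X K \<Longrightarrow> openin Y U \<Longrightarrow> openin (compact_open X x0 Y y0) {f \<in> based_maps X x0 Y y0. f ` K \<subseteq> U}"
  unfolding compact_open_def by (rule topology_generated_by_Basis) blast

lemma continuous_map_into_compact_open:
  assumes B: "\<And>u. u \<in> topspace Z \<Longrightarrow> w u \<in> based_maps X x0 Y y0"
    and C: "continuous_map (prod_topology Z X) Y (\<lambda>(u,x). w u x)"
  shows "continuous_map Z (compact_open X x0 Y y0) w"
  unfolding compact_open_def
proof (rule continuous_on_generated_topo)
  show "w ` topspace Z \<subseteq> \<Union>{{f \<in> based_maps X x0 Y y0. f ` K \<subseteq> U} | K U. compactin X K \<and> openin Y U}"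
    unfolding Union_CO_sub using B by auto
  fix S assume "S \<in> {{f \<in> based_maps X x0 Y y0. f ` K \<subseteq> U} | K U. compactin X K \<and> openin Y U}"
  then obtain K V where S: "S = {f \<in> based_maps X x0 Y y0. f ` K \<subseteq> V}" and K: "compactin X K" and V: "openin Y V"
    by blast
  let ?W = "{z \<in> topspace (prod_topology Z X). (\<lambda>(u,x). w u x) z \<in> V}"
  have W: "openin (prod_topology Z X) ?W"
    using openin_continuous_map_preimage[OF C V] .
  show "openin Z (w -` S \<inter> topspace Z)"
  proof (subst openin_subopen, intro ballI)
    fix u0 assume u0: "u0 \<in> w -` S \<inter> topspace Z"
    then have wK: "w u0 ` K \<subseteq> V" unfolding S by simp
    have "{u0} \<times> K \<subseteq> ?W"
    proof
      fix z assume "z \<in> {u0} \<times> K"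
      then obtain k where z: "z = (u0, k)" "k \<in> K" by blast
      then have "k \<in> topspace X" using compactin_subset_topspace[OF K] by blast
      moreover have "w u0 k \<in> V" using wK z(2) by blast
      ultimately show "z \<in> ?W" using z u0 by simp
    qed
    then obtain U' V' where U': "openin Z U'" "openin X V'" "u0 \<in> U'" "K \<subseteq> V'" "U' \<times> V' \<subseteq> ?W"
      using tube_lemma_right[OF W K, of u0] u0 by auto
    have "U' \<subseteq> w -` S \<inter> topspace Z"
    proof
      fix u assume u: "u \<in> U'"
      then have uZ: "u \<in> topspace Z" using openin_subset[OF U'(1)] by auto
      have "w u ` K \<subseteq> V"
      proof
        fix y assume "y \<in> w u ` K"
        then obtain k where "k \<in> K" "y = w u k" by auto
        then have "(u, k) \<in> U' \<times> V'" using U'(4) u by blast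
        then have "(u, k) \<in> ?W" by (rule subsetD[OF U'(5)])
        then show "y \<in> V" using \<open>y = w u k\<close> by simp
      qed
      then show "u \<in> w -` S \<inter> topspace Z" unfolding S using B[OF uZ] uZ by simp
    qed
    then show "\<exists>T. openin Z T \<and> u0 \<in> T \<and> T \<subseteq> w -` S \<inter> topspace Z"
      using U' by blast
  qed
qed

lemma continuous_map_ev:
  assumes C: "continuous_map Z (compact_open X x0 Y y0) w"
    and N: "neighbourhood_base_of (compactin X) X"
  shows "continuous_map (prod_topology Z X) Y (\<lambda>(u,x). w u x)"
proof -
  have B: "w u \<in> based_maps X x0 Y y0" if "u \<in> topspace Z" for u
  proof -
    have "w ` topspace Z \<subseteq> based_maps X x0 Y y0"
      using continuous_map_image_subset_topspace[OF C] unfolding topspace_compact_open .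
    then show ?thesis using that by (simp add: image_subset_iff)
  qed
  have Bc: "continuous_map X Y (w u)" if "u \<in> topspace Z" for u
    using B[OF that] by (simp add: based_maps_def)
  show ?thesis
    unfolding continuous_map_def
  proof (intro conjI allI impI)
    show "(\<lambda>(u,x). w u x) \<in> topspace (prod_topology Z X) \<rightarrow> topspace Y"
    proof
      fix z assume "z \<in> topspace (prod_topology Z X)"
      then obtain u x where ux: "z = (u,x)" "u \<in> topspace Z" "x \<in> topspace X" by (cases z) simp
      have "w u x \<in> topspace Y" using Bc[OF ux(2)] ux(3) by (simp add: continuous_map_def Pi_iff)
      then show "(\<lambda>(u,x). w u x) z \<in> topspace Y" using ux(1) by simp
    qed
    fix V assume V: "openin Y V"
    show "openin (prod_topology Z X) {z \<in> topspace (prod_topology Z X). (\<lambda>(u,x). w u x) z \<in> V}"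
    proof (subst openin_subopen, intro ballI)
      fix z assume z: "z \<in> {z \<in> topspace (prod_topology Z X). (\<lambda>(u,x). w u x) z \<in> V}"
      obtain u0 x0' where z0: "z = (u0, x0')" by (cases z) simp
      have u0: "u0 \<in> topspace Z" and x0': "x0' \<in> topspace X" and inV: "w u0 x0' \<in> V"
        using z unfolding z0 by simp_all
      have W0: "openin X {x \<in> topspace X. w u0 x \<in> V}"
        using openin_continuous_map_preimage[OF Bc[OF u0] V] .
      have "x0' \<in> {x \<in> topspace X. w u0 x \<in> V}" using x0' inV by simp
      then have "\<exists>N' K. openin X N' \<and> compactin X K \<and> x0' \<in> N' \<and> N' \<subseteq> K \<and> K \<subseteq> {x \<in> topspace X. w u0 x \<in> V}"
        using N W0 unfolding neighbourhood_base_of by blast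
      then obtain N' K where NK: "openin X N'" "compactin X K" "x0' \<in> N'" "N' \<subseteq> K" "K \<subseteq> {x \<in> topspace X. w u0 x \<in> V}"
        by blast
      let ?O = "{u \<in> topspace Z. w u \<in> {f \<in> based_maps X x0 Y y0. f ` K \<subseteq> V}}"
      have O: "openin Z ?O"
        using openin_continuous_map_preimage[OF C openin_compact_open_sub[OF NK(2) V]] .
      have "w u0 ` K \<subseteq> V" using NK(5) by blast
      then have u0O: "u0 \<in> ?O" using u0 B[OF u0] by simp
      have "?O \<times> N' \<subseteq> {z \<in> topspace (prod_topology Z X). (\<lambda>(u,x). w u x) z \<in> V}"
      proof
        fix z assume "z \<in> ?O \<times> N'"
        then obtain u x where zz: "z = (u,x)" "u \<in> ?O" "x \<in> N'" by blast
        then have "x \<in> K" using NK(4) by blast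
        then have "x \<in> topspace X" "w u x \<in> V" using zz(2) compactin_subset_topspace[OF NK(2)] by auto
        then show "z \<in> {z \<in> topspace (prod_topology Z X). (\<lambda>(u,x). w u x) z \<in> V}" using zz by simp
      qed
      moreover have "openin (prod_topology Z X) (?O \<times> N')"
        using O NK(1) by (simp add: openin_prod_Times_iff)
      ultimately show "\<exists>T. openin (prod_topology Z X) T \<and> z \<in> T \<and> T \<subseteq> {z \<in> topspace (prod_topology Z X). (\<lambda>(u,x). w u x) z \<in> V}"
        using z0 u0O NK(3) by (intro exI[of _ "?O \<times> N'"] conjI) auto
    qed
  qed
qed

section \<open>Pasting on the wedge\<close>

lemma continuous_map_ev_wedge:
  assumes x1: "x1 \<in> topspace X1" and x2: "x2 \<in> topspace X2"
    and c1: "closedin X1 {x1}" and c2: "closedin X2 {x2}"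
    and f: "continuous_map (prod_topology Z X1) Y (\<lambda>(u,x). f u x)"
    and g: "continuous_map (prod_topology Z X2) Y (\<lambda>(u,x). g u x)"
    and fg: "\<And>u. u \<in> topspace Z \<Longrightarrow> f u x1 = g u x2"
  shows "continuous_map (prod_topology Z (wedge_top X1 x1 X2 x2)) Y (\<lambda>(u,p). case p of Inl x \<Rightarrow> f u x | Inr x \<Rightarrow> g u x)"
proof -
  let ?W = "wedge_top X1 x1 X2 x2"
  let ?P = "prod_topology Z ?W"
  let ?r1 = "case_sum (\<lambda>x. x) (\<lambda>_. x1)"
  let ?r2 = "case_sum (\<lambda>_. x2) (\<lambda>x. x)"
  define T where "T b = (if b then topspace Z \<times> Inl ` topspace X1 else topspace Z \<times> insert (Inl x1) (Inr ` (topspace X2 - {x2})))" for b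
  define F where "F b = (if b then (\<lambda>(u,p). f u (?r1 p)) else (\<lambda>(u,p). g u (?r2 p)))" for b
  have F1: "continuous_map ?P Y (\<lambda>(u,p). f u (?r1 p))"
  proof -
    have a: "continuous_map ?P Z fst" by (rule continuous_map_fst)
    have b: "continuous_map ?P X1 (?r1 \<circ> snd)"
      by (rule continuous_map_compose[OF continuous_map_snd continuous_map_rho1[OF x1, of X2 x2]])
    have c: "continuous_map ?P (prod_topology Z X1) (\<lambda>z. (fst z, (?r1 \<circ> snd) z))"
      by (rule continuous_map_pairedI[OF a b])
    have d: "continuous_map ?P Y ((\<lambda>(u,x). f u x) \<circ> (\<lambda>z. (fst z, (?r1 \<circ> snd) z)))"
      by (rule continuous_map_compose[OF c f])
    have e: "((\<lambda>(u,x). f u x) \<circ> (\<lambda>z. (fst z, (?r1 \<circ> snd) z))) = (\<lambda>(u,p). f u (?r1 p))"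
      by (simp add: fun_eq_iff split_beta)
    show ?thesis using d unfolding e .
  qed
  have F2: "continuous_map ?P Y (\<lambda>(u,p). g u (?r2 p))"
  proof -
    have a: "continuous_map ?P Z fst" by (rule continuous_map_fst)
    have b: "continuous_map ?P X2 (?r2 \<circ> snd)"
      by (rule continuous_map_compose[OF continuous_map_snd continuous_map_rho2[OF x2, of X1 x1]])
    have c: "continuous_map ?P (prod_topology Z X2) (\<lambda>z. (fst z, (?r2 \<circ> snd) z))"
      by (rule continuous_map_pairedI[OF a b])
    have d: "continuous_map ?P Y ((\<lambda>(u,x). g u x) \<circ> (\<lambda>z. (fst z, (?r2 \<circ> snd) z)))"
      by (rule continuous_map_compose[OF c g])
    have e: "((\<lambda>(u,x). g u x) \<circ> (\<lambda>z. (fst z, (?r2 \<circ> snd) z))) = (\<lambda>(u,p). g u (?r2 p))"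
      by (simp add: fun_eq_iff split_beta)
    show ?thesis using d unfolding e .
  qed
  show ?thesis
  proof (rule pasting_lemma_closed[where I=UNIV and T=T and f=F])
    show "finite (UNIV::bool set)" by simp
    fix b :: bool
    show "closedin ?P (T b)"
      unfolding T_def using closedin_wedge_left[OF x1 c2] closedin_wedge_right[OF x1 c1, of X2 x2]
      by (simp add: closedin_prod_Times_iff)
    show "continuous_map (subtopology ?P (T b)) Y (F b)"
      unfolding F_def using F1 F2 by (simp add: continuous_map_from_subtopology)
  next
    fix b b' :: bool and z assume "z \<in> topspace ?P \<inter> T b \<inter> T b'"
    then show "F b z = F b' z"
      unfolding T_def F_def using fg by (cases b; cases b') auto
  next
    fix z assume z: "z \<in> topspace ?P"
    then obtain u p where zp: "z = (u,p)" "u \<in> topspace Z" "p \<in> topspace ?W" by auto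
    show "\<exists>j. j \<in> UNIV \<and> z \<in> T j \<and> (\<lambda>(u,p). case p of Inl x \<Rightarrow> f u x | Inr x \<Rightarrow> g u x) z = F j z"
    proof (cases p)
      case (Inl x)
      then show ?thesis using zp unfolding T_def F_def topspace_wedge[OF x1]
        by (intro exI[where x=True]) auto
    next
      case (Inr x)
      then show ?thesis using zp unfolding T_def F_def topspace_wedge[OF x1]
        by (intro exI[where x=False]) auto
    qed
  qed
qed

definition JD :: "'a topology \<Rightarrow> 'a \<Rightarrow> 'b topology \<Rightarrow> 'b \<Rightarrow> 'u set \<Rightarrow> ('u \<Rightarrow> 'a \<Rightarrow> 'c) \<Rightarrow> ('u \<Rightarrow> 'b \<Rightarrow> 'c) \<Rightarrow> 'u \<Rightarrow> ('a+'b) \<Rightarrow> 'c" where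
  "JD X1 x1 X2 x2 D f g = restrict (\<lambda>u. wedge_map X1 x1 X2 x2 (f u) (g u)) D"

locale ws =
  fixes X1 :: "'a topology" and x1 :: 'a and X2 :: "'b topology" and x2 :: 'b
    and Y :: "'c topology" and y0 :: 'c
  assumes x1: "x1 \<in> topspace X1" and x2: "x2 \<in> topspace X2"
    and c1: "closedin X1 {x1}" and c2: "closedin X2 {x2}"
    and nb1: "neighbourhood_base_of (compactin X1) X1"
    and nb2: "neighbourhood_base_of (compactin X2) X2"
begin

abbreviation "W \<equiv> wedge_top X1 x1 X2 x2"
abbreviation "CO1 \<equiv> compact_open X1 x1 Y y0"
abbreviation "CO2 \<equiv> compact_open X2 x2 Y y0"
abbreviation "COW \<equiv> compact_open W (Inl x1) Y y0"
abbreviation "wm \<equiv> wedge_map X1 x1 X2 x2"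

lemma based_of_CO:
  assumes "continuous_map Z (compact_open X x0 Y y0) f" "u \<in> topspace Z"
  shows "f u \<in> based_maps X x0 Y y0"
proof -
  have "f ` topspace Z \<subseteq> based_maps X x0 Y y0"
    using continuous_map_image_subset_topspace[OF assms(1)] unfolding topspace_compact_open .
  then show ?thesis using assms(2) by (simp add: image_subset_iff)
qed

lemma ev_J:
  assumes f: "continuous_map Z CO1 f" and g: "continuous_map Z CO2 g"
  shows "continuous_map (prod_topology Z W) Y (\<lambda>(u,p). wm (f u) (g u) p)"
proof -
  have e1: "continuous_map (prod_topology Z X1) Y (\<lambda>(u,x). f u x)" by (rule continuous_map_ev[OF f nb1])
  have e2: "continuous_map (prod_topology Z X2) Y (\<lambda>(u,x). g u x)" by (rule continuous_map_ev[OF g nb2])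
  have fg: "f u x1 = g u x2" if "u \<in> topspace Z" for u
    using based_of_CO[OF f that] based_of_CO[OF g that] by (simp add: based_maps_def)
  have P: "continuous_map (prod_topology Z W) Y (\<lambda>(u,p). case p of Inl x \<Rightarrow> f u x | Inr x \<Rightarrow> g u x)"
    by (rule continuous_map_ev_wedge[OF x1 x2 c1 c2 e1 e2 fg])
  show ?thesis
  proof (rule continuous_map_eq[OF P])
    fix z assume "z \<in> topspace (prod_topology Z W)"
    then obtain u p where "z = (u,p)" "p \<in> topspace W" by (cases z) auto
    then show "(\<lambda>(u,p). case p of Inl x \<Rightarrow> f u x | Inr x \<Rightarrow> g u x) z = (\<lambda>(u,p). wm (f u) (g u) p) z"
      by (simp add: wedge_map_def)
  qed
qed

lemma J_based:
  assumes f: "continuous_map Z CO1 f" and g: "continuous_map Z CO2 g" and u: "u \<in> topspace Z"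
  shows "wm (f u) (g u) \<in> based_maps W (Inl x1) Y y0"
proof -
  have a: "continuous_map W (prod_topology Z W) (\<lambda>p. (u, p))"
    using u by (intro continuous_map_pairedI continuous_map_const[THEN iffD2] continuous_map_id[unfolded id_def]) auto
  have b: "continuous_map W Y ((\<lambda>(u,p). wm (f u) (g u) p) \<circ> (\<lambda>p. (u, p)))"
    by (rule continuous_map_compose[OF a ev_J[OF f g]])
  have eq: "((\<lambda>(u,p). wm (f u) (g u) p) \<circ> (\<lambda>p. (u, p))) = wm (f u) (g u)"
    by (simp add: fun_eq_iff)
  have "Inl x1 \<in> topspace W" unfolding topspace_wedge[OF x1] using x1 by simp
  then have "wm (f u) (g u) (Inl x1) = f u x1" by (simp add: wedge_map_def)
  also have "\<dots> = y0" using based_of_CO[OF f u] by (simp add: based_maps_def)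
  finally have v: "wm (f u) (g u) (Inl x1) = y0" .
  have ext: "wm (f u) (g u) \<in> extensional (topspace W)"
    unfolding wedge_map_def by (rule restrict_extensional)
  show ?thesis unfolding based_maps_def using b[unfolded eq] v ext by simp
qed

lemma J_CO:
  assumes f: "continuous_map Z CO1 f" and g: "continuous_map Z CO2 g"
  shows "continuous_map Z COW (\<lambda>u. wm (f u) (g u))"
proof (rule continuous_map_into_compact_open)
  show "continuous_map (prod_topology Z W) Y (\<lambda>(u, x). wm (f u) (g u) x)"
    by (rule ev_J[OF f g])
qed (rule J_based[OF f g])

end

lemma restr_bil_JD:
  assumes "D \<subseteq> T"
  shows "restr D (bil (JD X1 x1 X2 x2 T) P Q) = bil (JD X1 x1 X2 x2 D) (restr D P) (restr D Q)"
  unfolding restr_def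
proof (rule linext_bil)
  fix f g
  show "restrict (JD X1 x1 X2 x2 T f g) D = JD X1 x1 X2 x2 D (restrict f D) (restrict g D)"
    using assms by (auto simp: JD_def fun_eq_iff)
qed

lemma boxprod_cong:
  assumes "\<And>k. k \<in> A \<Longrightarrow> V k = V' k"
  shows "boxprod A U V = boxprod A U V'"
proof -
  have "PiE A (\<lambda>k. Poly_Mapping.keys (V k)) = PiE A (\<lambda>k. Poly_Mapping.keys (V' k))"
    using assms by (intro PiE_cong) auto
  then show ?thesis unfolding boxprod_def
    using assms by (intro sum.cong refl arg_cong2[where f=Poly_Mapping.single] prod.cong) (auto simp: PiE_iff)
qed

lemma topspace_simplex: "topspace (simplex_top E) = face E E"
  unfolding simplex_top_def by (auto simp: face_def)

lemma face_sub: "face E F \<subseteq> face E E"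
  by (auto simp: face_def)

lemma glue_JD:
  fixes E :: "'e set"
  shows "glue A (face E) (\<lambda>F. JD X1 x1 X2 x2 (face E F) (c1 F) (c2 F))
     = JD X1 x1 X2 x2 (\<Union>F\<in>A. face E F) (glue A (face E) c1) (glue A (face E) c2)"
proof (rule ext)
  fix x
  show "glue A (face E) (\<lambda>F. JD X1 x1 X2 x2 (face E F) (c1 F) (c2 F)) x
     = JD X1 x1 X2 x2 (\<Union>F\<in>A. face E F) (glue A (face E) c1) (glue A (face E) c2) x"
  proof (cases "\<exists>F\<in>A. x \<in> face E F")
    case True
    define F0 where "F0 = (SOME F. F \<in> A \<and> x \<in> face E F)"
    have ex: "\<exists>F. F \<in> A \<and> x \<in> face E F" using True by blast
    have F0: "F0 \<in> A \<and> x \<in> face E F0" unfolding F0_def by (rule someI_ex[OF ex])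
    have x: "x \<in> (\<Union>F\<in>A. face E F)" using True by blast
    have gl: "glue A (face E) c x = c F0 x" for c :: "'e set \<Rightarrow> ('e \<Rightarrow> real) \<Rightarrow> 'z"
      unfolding glue_def F0_def using True by (simp only: if_True)
    have l: "glue A (face E) (\<lambda>F. JD X1 x1 X2 x2 (face E F) (c1 F) (c2 F)) x = wedge_map X1 x1 X2 x2 (c1 F0 x) (c2 F0 x)"
      unfolding glue_def F0_def[symmetric] using True F0 by (simp add: JD_def)
    have r: "JD X1 x1 X2 x2 (\<Union>F\<in>A. face E F) (glue A (face E) c1) (glue A (face E) c2) x = wedge_map X1 x1 X2 x2 (c1 F0 x) (c2 F0 x)"
      using x by (simp add: JD_def gl)
    show ?thesis using l r by simp
  next
    case False
    then have x: "x \<notin> (\<Union>F\<in>A. face E F)" by blast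
    have l: "glue A (face E) (\<lambda>F. JD X1 x1 X2 x2 (face E F) (c1 F) (c2 F)) x = undefined"
      unfolding glue_def using False by (simp only: if_False)
    have r: "JD X1 x1 X2 x2 (\<Union>F\<in>A. face E F) (glue A (face E) c1) (glue A (face E) c2) x = undefined"
      using x by (simp add: JD_def)
    show ?thesis using l r by simp
  qed
qed

lemma fissile_bil:
  assumes E: "finite E" and f1: "fissile E S1" and f2: "fissile E S2"
  shows "fissile E (bil (JD X1 x1 X2 x2 (face E E)) S1 S2)"
  unfolding fissile_def
proof
  fix A assume A: "A \<in> layouts E"
  have "A \<subseteq> Pow E" using A unfolding layouts_def by blast
  then have finA: "finite A" by (rule finite_subset) (simp add: E)
  let ?D = "\<Union>F\<in>A. face E F"
  have DE: "?D \<subseteq> face E E" using face_sub by blast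
  have "restr ?D (bil (JD X1 x1 X2 x2 (face E E)) S1 S2) = bil (JD X1 x1 X2 x2 ?D) (restr ?D S1) (restr ?D S2)"
    by (rule restr_bil_JD[OF DE])
  also have "\<dots> = bil (JD X1 x1 X2 x2 ?D) (boxprod A (face E) (\<lambda>F. restr (face E F) S1)) (boxprod A (face E) (\<lambda>F. restr (face E F) S2))"
    using f1 f2 A unfolding fissile_def by simp
  also have "\<dots> = boxprod A (face E) (\<lambda>F. bil (JD X1 x1 X2 x2 (face E F)) (restr (face E F) S1) (restr (face E F) S2))"
    by (rule boxprod_bil[where \<phi>="\<lambda>F. JD X1 x1 X2 x2 (face E F)" and \<psi>="JD X1 x1 X2 x2 (\<Union>F\<in>A. face E F)" and U="face E", OF finA glue_JD, symmetric])
  also have "\<dots> = boxprod A (face E) (\<lambda>F. restr (face E F) (bil (JD X1 x1 X2 x2 (face E E)) S1 S2))"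
    by (rule boxprod_cong) (rule restr_bil_JD[OF face_sub, symmetric])
  finally show "restr ?D (bil (JD X1 x1 X2 x2 (face E E)) S1 S2) = boxprod A (face E) (\<lambda>F. restr (face E F) (bil (JD X1 x1 X2 x2 (face E E)) S1 S2))" .
qed

context ws begin

lemma J_unbased:
  assumes f: "f \<in> unbased_maps U CO1" and g: "g \<in> unbased_maps U CO2"
  shows "JD X1 x1 X2 x2 (topspace U) f g \<in> unbased_maps U COW"
proof -
  have "continuous_map U COW (\<lambda>u. wm (f u) (g u))"
    using f g unfolding unbased_maps_def by (intro J_CO) auto
  then have "continuous_map U COW (JD X1 x1 X2 x2 (topspace U) f g)"
    by (rule continuous_map_eq) (simp add: JD_def)
  then show ?thesis unfolding unbased_maps_def JD_def by simp
qed

lemma const_wm: "wm (const_map X1 y0) (const_map X2 y0) = const_map W y0"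
  unfolding wedge_map_def const_map_def
  by (rule restrict_ext) (auto simp: topspace_wedge[OF x1])

lemma J_pc:
  assumes f: "f \<in> unbased_maps U (subtopology CO1 (path_component_of_set CO1 (const_map X1 y0)))"
    and g: "g \<in> unbased_maps U (subtopology CO2 (path_component_of_set CO2 (const_map X2 y0)))"
  shows "JD X1 x1 X2 x2 (topspace U) f g \<in> unbased_maps U (subtopology COW (path_component_of_set COW (const_map W y0)))"
proof -
  have fc: "continuous_map U CO1 f" and fpc: "f \<in> topspace U \<rightarrow> path_component_of_set CO1 (const_map X1 y0)"
    using f unfolding unbased_maps_def continuous_map_in_subtopology by auto
  have gc: "continuous_map U CO2 g" and gpc: "g \<in> topspace U \<rightarrow> path_component_of_set CO2 (const_map X2 y0)"
    using g unfolding unbased_maps_def continuous_map_in_subtopology by auto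
  have fu: "f \<in> unbased_maps U CO1" using f fc unfolding unbased_maps_def by simp
  have gu: "g \<in> unbased_maps U CO2" using g gc unfolding unbased_maps_def by simp
  have ub: "JD X1 x1 X2 x2 (topspace U) f g \<in> unbased_maps U COW"
    by (rule J_unbased[OF fu gu])
  have pc: "JD X1 x1 X2 x2 (topspace U) f g u \<in> path_component_of_set COW (const_map W y0)" if u: "u \<in> topspace U" for u
  proof -
    obtain \<gamma>1 where g1: "pathin CO1 \<gamma>1" "\<gamma>1 0 = const_map X1 y0" "\<gamma>1 1 = f u"
      using fpc u unfolding path_component_of_def by blast
    obtain \<gamma>2 where g2: "pathin CO2 \<gamma>2" "\<gamma>2 0 = const_map X2 y0" "\<gamma>2 1 = g u"
      using gpc u unfolding path_component_of_def by blast
    have "pathin COW (\<lambda>t. wm (\<gamma>1 t) (\<gamma>2 t))"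
      using g1(1) g2(1) unfolding pathin_def by (rule J_CO)
    moreover have "wm (\<gamma>1 0) (\<gamma>2 0) = const_map W y0" using g1 g2 const_wm by simp
    moreover have "wm (\<gamma>1 1) (\<gamma>2 1) = JD X1 x1 X2 x2 (topspace U) f g u" using g1 g2 u by (simp add: JD_def)
    ultimately show ?thesis unfolding path_component_of_def by (intro CollectI exI[of _ "\<lambda>t. wm (\<gamma>1 t) (\<gamma>2 t)"]) simp
  qed
  show ?thesis using ub pc unfolding unbased_maps_def continuous_map_in_subtopology by auto
qed

end

definition comb :: "'c \<Rightarrow> (('u\<times>'a) option \<Rightarrow> 'c) \<Rightarrow> (('u\<times>'b) option \<Rightarrow> 'c) \<Rightarrow> ('u \<times> ('a+'b)) option \<Rightarrow> 'c" where
  "comb y0 h1 h2 p = (case p of None \<Rightarrow> y0 | Some (u, Inl x) \<Rightarrow> h1 (Some (u,x)) | Some (u, Inr x) \<Rightarrow> h2 (Some (u,x)))"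

definition m1 :: "('u \<times> ('a+'b)) option \<Rightarrow> ('u\<times>'a) option" where
  "m1 p = (case p of Some (u, Inl x) \<Rightarrow> Some (u,x) | _ \<Rightarrow> None)"

definition m2 :: "('u \<times> ('a+'b)) option \<Rightarrow> ('u\<times>'b) option" where
  "m2 p = (case p of Some (u, Inr x) \<Rightarrow> Some (u,x) | _ \<Rightarrow> None)"

lemma topspace_wr_top: "topspace (wr_top U X x0) = wr_proj x0 ` (topspace U \<times> topspace X)"
  unfolding wr_top_def topspace_quotient_top by simp

lemma wr_proj_eq: "wr_proj x0 (u, x) = (if x = x0 then None else Some (u, x))"
  by (simp add: wr_proj_def)

lemma sharp_Some:
  assumes "u \<in> topspace U" "x \<in> topspace X" "x \<noteq> x0"
  shows "sharp U X x0 y0 w (Some (u,x)) = w u x"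
proof -
  have "Some (u,x) \<in> wr_proj x0 ` (topspace U \<times> topspace X)"
    using assms by (intro image_eqI[where x="(u,x)"]) (auto simp: wr_proj_eq)
  then show ?thesis unfolding sharp_def by simp
qed

lemma sharp_None:
  assumes "u \<in> topspace U" "x0 \<in> topspace X"
  shows "sharp U X x0 y0 w None = y0"
proof -
  have "None \<in> wr_proj x0 ` (topspace U \<times> topspace X)"
    using assms by (intro image_eqI[where x="(u,x0)"]) (auto simp: wr_proj_eq)
  then show ?thesis unfolding sharp_def by simp
qed

lemma restr_comb:
  assumes "R \<subseteq> D"
  shows "restrict (restrict (comb y0 h1 h2) D) R = restrict (comb y0 (restrict h1 (m1 ` R)) (restrict h2 (m2 ` R))) R"
proof (rule ext)
  fix p
  show "restrict (restrict (comb y0 h1 h2) D) R p = restrict (comb y0 (restrict h1 (m1 ` R)) (restrict h2 (m2 ` R))) R p"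
  proof (cases "p \<in> R")
    case True
    then have pD: "p \<in> D" using assms by blast
    show ?thesis
    proof (cases p)
      case None
      then show ?thesis using True pD by (simp add: comb_def)
    next
      case (Some a)
      obtain u q where a: "a = (u,q)" by (cases a)
      show ?thesis
      proof (cases q)
        case (Inl x)
        have "Some (u,x) \<in> m1 ` R" using True Some a Inl by (intro image_eqI[where x=p]) (auto simp: m1_def)
        then show ?thesis using True pD Some a Inl by (simp add: comb_def)
      next
        case (Inr x)
        have "Some (u,x) \<in> m2 ` R" using True Some a Inr by (intro image_eqI[where x=p]) (auto simp: m2_def)
        then show ?thesis using True pD Some a Inr by (simp add: comb_def)
      qed
    qed
  next
    case False
    then show ?thesis by simp
  qed
qed

context ws begin

lemma sharp_J:
  "sharp U W (Inl x1) y0 (JD X1 x1 X2 x2 (topspace U) f g)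
    = restrict (comb y0 (sharp U X1 x1 y0 f) (sharp U X2 x2 y0 g)) (wr_proj (Inl x1) ` (topspace U \<times> topspace W))"
  unfolding sharp_def[of U W]
proof (rule restrict_ext)
  fix p assume "p \<in> wr_proj (Inl x1) ` (topspace U \<times> topspace W)"
  then obtain u q where uq: "u \<in> topspace U" "q \<in> topspace W" "p = wr_proj (Inl x1) (u,q)" by blast
  show "(case p of None \<Rightarrow> y0 | Some (u, x) \<Rightarrow> JD X1 x1 X2 x2 (topspace U) f g u x) = comb y0 (sharp U X1 x1 y0 f) (sharp U X2 x2 y0 g) p"
  proof (cases "q = Inl x1")
    case True
    then show ?thesis using uq by (simp add: wr_proj_eq comb_def)
  next
    case False
    then have p: "p = Some (u,q)" using uq by (simp add: wr_proj_eq)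
    have J: "JD X1 x1 X2 x2 (topspace U) f g u q = (case q of Inl x \<Rightarrow> f u x | Inr x \<Rightarrow> g u x)"
      using uq by (simp add: JD_def wedge_map_def)
    show ?thesis
    proof (cases q)
      case (Inl x)
      then have "x \<in> topspace X1" "x \<noteq> x1" using uq(2) False unfolding topspace_wedge[OF x1] by auto
      then show ?thesis using p J Inl uq(1) by (simp add: comb_def sharp_Some)
    next
      case (Inr x)
      then have "x \<in> topspace X2" "x \<noteq> x2" using uq(2) unfolding topspace_wedge[OF x1] by auto
      then show ?thesis using p J Inr uq(1) by (simp add: comb_def sharp_Some)
    qed
  qed
qed

lemma sharp_J_based:
  assumes f: "continuous_map U CO1 f" and g: "continuous_map U CO2 g" and u0: "u0 \<in> topspace U"
  shows "sharp U W (Inl x1) y0 (JD X1 x1 X2 x2 (topspace U) f g) \<in> based_maps (wr_top U W (Inl x1)) None Y y0"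
proof -
  let ?s = "sharp U W (Inl x1) y0 (JD X1 x1 X2 x2 (topspace U) f g)"
  have W1: "Inl x1 \<in> topspace W" unfolding topspace_wedge[OF x1] using x1 by simp
  have "continuous_map (prod_topology U W) Y (?s \<circ> wr_proj (Inl x1))"
  proof (rule continuous_map_eq[OF ev_J[OF f g]])
    fix z assume "z \<in> topspace (prod_topology U W)"
    then obtain u q where z: "z = (u,q)" "u \<in> topspace U" "q \<in> topspace W" by (cases z) auto
    show "(\<lambda>(u,p). wm (f u) (g u) p) z = (?s \<circ> wr_proj (Inl x1)) z"
    proof (cases "q = Inl x1")
      case True
      have "wm (f u) (g u) (Inl x1) = y0" using J_based[OF f g z(2)] by (simp add: based_maps_def)
      moreover have "?s None = y0" by (rule sharp_None[OF z(2) W1])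
      ultimately show ?thesis using z True by (simp add: wr_proj_eq)
    next
      case False
      have "?s (Some (u,q)) = JD X1 x1 X2 x2 (topspace U) f g u q" by (rule sharp_Some[OF z(2) z(3) False])
      then show ?thesis using z False by (simp add: wr_proj_eq JD_def)
    qed
  qed
  then have c: "continuous_map (wr_top U W (Inl x1)) Y ?s"
    unfolding wr_top_def by (rule continuous_map_from_quotient_top)
  have v: "?s None = y0" by (rule sharp_None[OF u0 W1])
  have e: "?s \<in> extensional (topspace (wr_top U W (Inl x1)))"
    unfolding topspace_wr_top sharp_def by (rule restrict_extensional)
  show ?thesis unfolding based_maps_def using c v e by simp
qed

lemma Fsets_m1:
  assumes "R \<in> Fsets (wr_top U W (Inl x1)) None n"
  shows "m1 ` R \<in> Fsets (wr_top U X1 x1) None n"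
proof -
  have R: "finite R" "R \<subseteq> wr_proj (Inl x1) ` (topspace U \<times> topspace W)" "None \<in> R" "card R \<le> n + 1"
    using assms unfolding Fsets_def topspace_wr_top by auto
  have sub: "m1 ` R \<subseteq> wr_proj x1 ` (topspace U \<times> topspace X1)"
  proof
    fix p' assume "p' \<in> m1 ` R"
    then obtain p where p: "p \<in> R" "p' = m1 p" by blast
    then obtain u q where uq: "u \<in> topspace U" "q \<in> topspace W" "p = wr_proj (Inl x1) (u,q)" using R(2) by blast
    have N: "None \<in> wr_proj x1 ` (topspace U \<times> topspace X1)"
      using uq(1) x1 by (intro image_eqI[where x="(u,x1)"]) (auto simp: wr_proj_eq)
    show "p' \<in> wr_proj x1 ` (topspace U \<times> topspace X1)"
    proof (cases "q = Inl x1")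
      case True
      then show ?thesis using p uq N by (simp add: wr_proj_eq m1_def)
    next
      case False
      show ?thesis
      proof (cases q)
        case (Inl x)
        then have "x \<in> topspace X1" "x \<noteq> x1" using uq(2) False unfolding topspace_wedge[OF x1] by auto
        then have "Some (u,x) \<in> wr_proj x1 ` (topspace U \<times> topspace X1)"
          using uq(1) by (intro image_eqI[where x="(u,x)"]) (auto simp: wr_proj_eq)
        then show ?thesis using p uq False Inl by (simp add: wr_proj_eq m1_def)
      next
        case (Inr x)
        then show ?thesis using p uq N False by (simp add: wr_proj_eq m1_def)
      qed
    qed
  qed
  have "None \<in> m1 ` R" using R(3) by (intro image_eqI[where x=None]) (auto simp: m1_def)
  moreover have "card (m1 ` R) \<le> n + 1" using card_image_le[OF R(1), of m1] R(4) by linarith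
  ultimately show ?thesis unfolding Fsets_def topspace_wr_top using sub R(1) by auto
qed

lemma Fsets_m2:
  assumes "R \<in> Fsets (wr_top U W (Inl x1)) None n"
  shows "m2 ` R \<in> Fsets (wr_top U X2 x2) None n"
proof -
  have R: "finite R" "R \<subseteq> wr_proj (Inl x1) ` (topspace U \<times> topspace W)" "None \<in> R" "card R \<le> n + 1"
    using assms unfolding Fsets_def topspace_wr_top by auto
  have sub: "m2 ` R \<subseteq> wr_proj x2 ` (topspace U \<times> topspace X2)"
  proof
    fix p' assume "p' \<in> m2 ` R"
    then obtain p where p: "p \<in> R" "p' = m2 p" by blast
    then obtain u q where uq: "u \<in> topspace U" "q \<in> topspace W" "p = wr_proj (Inl x1) (u,q)" using R(2) by blast
    have N: "None \<in> wr_proj x2 ` (topspace U \<times> topspace X2)"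
      using uq(1) x2 by (intro image_eqI[where x="(u,x2)"]) (auto simp: wr_proj_eq)
    show "p' \<in> wr_proj x2 ` (topspace U \<times> topspace X2)"
    proof (cases "q = Inl x1")
      case True
      then show ?thesis using p uq N by (simp add: wr_proj_eq m2_def)
    next
      case False
      show ?thesis
      proof (cases q)
        case (Inl x)
        then show ?thesis using p uq N False by (simp add: wr_proj_eq m2_def)
      next
        case (Inr x)
        then have "x \<in> topspace X2" "x \<noteq> x2" using uq(2) unfolding topspace_wedge[OF x1] by auto
        then have "Some (u,x) \<in> wr_proj x2 ` (topspace U \<times> topspace X2)"
          using uq(1) by (intro image_eqI[where x="(u,x)"]) (auto simp: wr_proj_eq)
        then show ?thesis using p uq False Inr by (simp add: wr_proj_eq m2_def)
      qed
    qed
  qed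
  have "None \<in> m2 ` R" using R(3) by (intro image_eqI[where x=None]) (auto simp: m2_def)
  moreover have "card (m2 ` R) \<le> n + 1" using card_image_le[OF R(1), of m2] R(4) by linarith
  ultimately show ?thesis unfolding Fsets_def topspace_wr_top using sub R(1) by auto
qed

end

context ws begin

lemma filtX_bil:
  assumes u0: "u0 \<in> topspace U"
    and P: "P \<in> fag (unbased_maps U CO1)" and Q: "Q \<in> fag (unbased_maps U CO2)"
    and van: "(\<forall>R\<in>Fsets (wr_top U X1 x1) None n. restr R (linext (sharp U X1 x1 y0) P) = 0)
            \<or> (\<forall>R\<in>Fsets (wr_top U X2 x2) None n. restr R (linext (sharp U X2 x2 y0) Q) = 0)"
    and s: "n = s - 1"
  shows "bil (JD X1 x1 X2 x2 (topspace U)) P Q \<in> filtX U W (Inl x1) Y y0 s"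
proof -
  let ?J = "JD X1 x1 X2 x2 (topspace U)"
  let ?DW = "wr_proj (Inl x1) ` (topspace U \<times> topspace W)"
  let ?Phi = "\<lambda>h1 h2. restrict (comb y0 h1 h2) ?DW"
  have kP: "kk P \<subseteq> unbased_maps U CO1" using P by (simp add: fag_def)
  have kQ: "kk Q \<subseteq> unbased_maps U CO2" using Q by (simp add: fag_def)
  have kB: "kk (bil ?J P Q) \<subseteq> unbased_maps U COW"
  proof
    fix h assume "h \<in> kk (bil ?J P Q)"
    then have "h \<in> (\<lambda>(f,g). ?J f g) ` (kk P \<times> kk Q)" using keys_bil[of ?J P Q] by blast
    then obtain f g where fg: "f \<in> kk P" "g \<in> kk Q" "h = ?J f g" by auto
    have "f \<in> unbased_maps U CO1" "g \<in> unbased_maps U CO2" using fg(1,2) kP kQ by blast+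
    then show "h \<in> unbased_maps U COW" unfolding fg(3) by (rule J_unbased)
  qed
  have lin: "linext (sharp U W (Inl x1) y0) (bil ?J P Q)
     = bil ?Phi (linext (sharp U X1 x1 y0) P) (linext (sharp U X2 x2 y0) Q)"
    by (rule linext_bil) (rule sharp_J)
  have kL: "kk (linext (sharp U W (Inl x1) y0) (bil ?J P Q)) \<subseteq> based_maps (wr_top U W (Inl x1)) None Y y0"
  proof
    fix h assume "h \<in> kk (linext (sharp U W (Inl x1) y0) (bil ?J P Q))"
    then have "h \<in> sharp U W (Inl x1) y0 ` kk (bil ?J P Q)" by (rule subsetD[OF keys_linext])
    then obtain h' where h': "h' \<in> kk (bil ?J P Q)" "h = sharp U W (Inl x1) y0 h'" by blast
    have "h' \<in> (\<lambda>(f,g). ?J f g) ` (kk P \<times> kk Q)" using keys_bil[of ?J P Q] h'(1) by blast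
    then obtain f g where fg: "f \<in> kk P" "g \<in> kk Q" "h' = ?J f g" by auto
    have "f \<in> unbased_maps U CO1" "g \<in> unbased_maps U CO2" using fg(1,2) kP kQ by blast+
    then have "continuous_map U CO1 f" "continuous_map U CO2 g" unfolding unbased_maps_def by simp_all
    then have "sharp U W (Inl x1) y0 (?J f g) \<in> based_maps (wr_top U W (Inl x1)) None Y y0"
      by (rule sharp_J_based[OF _ _ u0])
    then show "h \<in> based_maps (wr_top U W (Inl x1)) None Y y0"
      unfolding h'(2) fg(3) .
  qed
  have vanish: "restr R (linext (sharp U W (Inl x1) y0) (bil ?J P Q)) = 0"
    if R: "R \<in> Fsets (wr_top U W (Inl x1)) None (s - 1)" for R
  proof -
    have RD: "R \<subseteq> ?DW" using R unfolding Fsets_def topspace_wr_top by blast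
    have "restr R (linext (sharp U W (Inl x1) y0) (bil ?J P Q))
        = restr R (bil ?Phi (linext (sharp U X1 x1 y0) P) (linext (sharp U X2 x2 y0) Q))"
      by (simp only: lin)
    also have "\<dots> = bil (\<lambda>k1 k2. restrict (comb y0 k1 k2) R)
        (restr (m1 ` R) (linext (sharp U X1 x1 y0) P)) (restr (m2 ` R) (linext (sharp U X2 x2 y0) Q))"
      unfolding restr_def by (rule linext_bil) (rule restr_comb[OF RD])
    also have "\<dots> = 0"
      using van
    proof
      assume "\<forall>R\<in>Fsets (wr_top U X1 x1) None n. restr R (linext (sharp U X1 x1 y0) P) = 0"
      then have "restr (m1 ` R) (linext (sharp U X1 x1 y0) P) = 0" using Fsets_m1[OF R] s by blast
      then show ?thesis by simp
    next
      assume "\<forall>R\<in>Fsets (wr_top U X2 x2) None n. restr R (linext (sharp U X2 x2 y0) Q) = 0"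
      then have "restr (m2 ` R) (linext (sharp U X2 x2 y0) Q) = 0" using Fsets_m2[OF R] s by blast
      then show ?thesis by simp
    qed
    finally show ?thesis .
  qed
  have "linext (sharp U W (Inl x1) y0) (bil ?J P Q) \<in> filt (wr_top U W (Inl x1)) None Y y0 s"
    unfolding filt_def fag_def using kL vanish by blast
  then show ?thesis
    unfolding filtX_def fag_def using kB by blast
qed

end

lemma keys_gen[simp]: "kk (gen w) = {w}"
  by (simp add: gen_def)

lemma fag_add: "V \<in> fag A \<Longrightarrow> V' \<in> fag A \<Longrightarrow> V + V' \<in> fag A"
  unfolding fag_def mem_Collect_eq using keys_add[of V V'] by (meson Un_least subset_trans)

lemma restr_add: "restr R (V + V') = restr R V + restr R V'"
  unfolding restr_def by (rule linext_add)

lemma filtX_add: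
  assumes "V \<in> filtX U X x0 Y y0 s" "V' \<in> filtX U X x0 Y y0 s"
  shows "V + V' \<in> filtX U X x0 Y y0 s"
proof -
  have a: "V \<in> fag (unbased_maps U (compact_open X x0 Y y0))" "V' \<in> fag (unbased_maps U (compact_open X x0 Y y0))"
    using assms unfolding filtX_def by simp_all
  have b: "linext (sharp U X x0 y0) V \<in> filt (wr_top U X x0) None Y y0 s"
    "linext (sharp U X x0 y0) V' \<in> filt (wr_top U X x0) None Y y0 s"
    using assms unfolding filtX_def by simp_all
  have c: "linext (sharp U X x0 y0) V \<in> fag (based_maps (wr_top U X x0) None Y y0)"
     "linext (sharp U X x0 y0) V' \<in> fag (based_maps (wr_top U X x0) None Y y0)"
    using b unfolding filt_def by simp_all
  have d: "restr R (linext (sharp U X x0 y0) (V + V')) = 0" if "R \<in> Fsets (wr_top U X x0) None (s - 1)" for R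
    using b that unfolding filt_def linext_add restr_add by simp
  have "linext (sharp U X x0 y0) (V + V') \<in> filt (wr_top U X x0) None Y y0 s"
    unfolding filt_def linext_add using fag_add[OF c] d[unfolded linext_add] by blast
  then show ?thesis unfolding filtX_def using fag_add[OF a] by blast
qed

lemma Xi_unbased:
  assumes "a \<in> topspace T"
  shows "Xi U a \<in> unbased_maps U T"
proof -
  have "continuous_map U T (\<lambda>_. a)" using assms by simp
  then have "continuous_map U T (Xi U a)" by (rule continuous_map_eq) (simp add: Xi_def)
  moreover have "Xi U a \<in> extensional (topspace U)" unfolding Xi_def by (rule restrict_extensional)
  ultimately show ?thesis unfolding unbased_maps_def by simp
qed

lemma cell_basics:
  assumes "cellular_space X x0"
  shows "Hausdorff_space X" "x0 \<in> topspace X"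
proof -
  show "Hausdorff_space X" using assms unfolding cellular_space_def by (rule conjunct1)
  have "\<exists>C d \<Phi>. cw_structure X C d \<Phi> \<and> {x0} \<in> C \<and> d {x0} = 0"
    using assms unfolding cellular_space_def by (rule conjunct2)
  then obtain C d \<Phi> where cw: "cw_structure X C d \<Phi>" and x0C: "{x0} \<in> C"
    by blast
  have "\<Union>C = topspace X" using cw unfolding cw_structure_def by (rule conjunct1[OF conjunct2])
  then show "x0 \<in> topspace X" using x0C by blast
qed

lemma nb_of_compact_Hausdorff:
  assumes "Hausdorff_space X" "compact_space X"
  shows "neighbourhood_base_of (compactin X) X"
  using locally_compact_space_neighbourhood_base[of X] assms compact_imp_locally_compact_space by blast

lemma simplex_nonempty:
  assumes "finite E" "E \<noteq> {}"
  shows "\<exists>u. u \<in> topspace (simplex_top E)"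
proof -
  obtain e where e: "e \<in> E" using assms by blast
  let ?t = "restrict (\<lambda>i. if i = e then 1 else 0::real) E"
  have "sum ?t E = 1" using e assms(1) by simp
  then have "?t \<in> face E E" unfolding face_def by auto
  then show ?thesis unfolding topspace_simplex by blast
qed

theorem corollary7p3:
  fixes X1 :: "'a topology" and X2 :: "'b topology" and Y :: "'c topology"
    and x1 :: 'a and x2 :: 'b and y0 :: 'c and r :: nat
    and a1 :: "'a \<Rightarrow> 'c" and a2 :: "'b \<Rightarrow> 'c"
  assumes "cellular_space X1 x1" and "cellular_space X2 x2" and "cellular_space Y y0"
    and "compact_space X1" and "compact_space X2"
    and "a1 \<in> based_maps X1 x1 Y y0" and "a2 \<in> based_maps X2 x2 Y y0"
    and "strongly_similar X1 x1 Y y0 r (const_map X1 y0) a1"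
    and "strongly_similar X2 x2 Y y0 r (const_map X2 y0) a2"
  shows "strongly_similar (wedge_top X1 x1 X2 x2) (Inl x1) Y y0 r
           (const_map (wedge_top X1 x1 X2 x2) y0) (wedge_map X1 x1 X2 x2 a1 a2)"
proof -
  note cb1 = cell_basics[OF assms(1)] and cb2 = cell_basics[OF assms(2)]
  interpret ws X1 x1 X2 x2 Y y0
  proof
    show "x1 \<in> topspace X1" "x2 \<in> topspace X2" using cb1 cb2 by simp_all
    show "closedin X1 {x1}" using cb1 by (intro closedin_t1_singleton Hausdorff_imp_t1_space) simp_all
    show "closedin X2 {x2}" using cb2 by (intro closedin_t1_singleton Hausdorff_imp_t1_space) simp_all
    show "neighbourhood_base_of (compactin X1) X1" using cb1 assms(4) by (intro nb_of_compact_Hausdorff) simp_all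
    show "neighbourhood_base_of (compactin X2) X2" using cb2 assms(5) by (intro nb_of_compact_Hausdorff) simp_all
  qed
  show ?thesis
    unfolding strongly_similar_def
  proof (intro allI impI)
    fix E :: "nat set" assume E: "finite E \<and> E \<noteq> {}"
    let ?U = "simplex_top E"
    let ?J = "JD X1 x1 X2 x2 (topspace ?U)"
    obtain S1 where S1: "S1 \<in> fag (unbased_maps ?U (subtopology CO1 (path_component_of_set CO1 (const_map X1 y0))))"
      "fissile E S1" "gen (Xi ?U a1) - S1 \<in> filtX ?U X1 x1 Y y0 (r + 1)"
      using assms(8) E unfolding strongly_similar_def by blast
    obtain S2 where S2: "S2 \<in> fag (unbased_maps ?U (subtopology CO2 (path_component_of_set CO2 (const_map X2 y0))))"
      "fissile E S2" "gen (Xi ?U a2) - S2 \<in> filtX ?U X2 x2 Y y0 (r + 1)"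
      using assms(9) E unfolding strongly_similar_def by blast
    obtain u0 where u0: "u0 \<in> topspace ?U" using simplex_nonempty E by blast
    have kS: "bil ?J S1 S2 \<in> fag (unbased_maps ?U (subtopology COW (path_component_of_set COW (const_map W y0))))"
      unfolding fag_def mem_Collect_eq
    proof
      fix h assume "h \<in> kk (bil ?J S1 S2)"
      then have "h \<in> (\<lambda>(f,g). ?J f g) ` (kk S1 \<times> kk S2)" by (rule subsetD[OF keys_bil])
      then obtain f g where fg: "f \<in> kk S1" "g \<in> kk S2" "h = ?J f g" by auto
      have "f \<in> unbased_maps ?U (subtopology CO1 (path_component_of_set CO1 (const_map X1 y0)))"
        using fg(1) S1(1) unfolding fag_def by blast
      moreover have "g \<in> unbased_maps ?U (subtopology CO2 (path_component_of_set CO2 (const_map X2 y0)))"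
        using fg(2) S2(1) unfolding fag_def by blast
      ultimately show "h \<in> unbased_maps ?U (subtopology COW (path_component_of_set COW (const_map W y0)))"
        unfolding fg(3) by (rule J_pc)
    qed
    have fS: "fissile E (bil ?J S1 S2)"
      unfolding topspace_simplex using E S1(2) S2(2) by (intro fissile_bil) simp_all
    have S1u: "S1 \<in> fag (unbased_maps ?U CO1)"
      using S1(1) unfolding fag_def unbased_maps_def continuous_map_in_subtopology by blast
    have a1T: "a1 \<in> topspace CO1" using assms(6) by (simp add: topspace_compact_open)
    have a2T: "a2 \<in> topspace CO2" using assms(7) by (simp add: topspace_compact_open)
    have G2u: "gen (Xi ?U a2) \<in> fag (unbased_maps ?U CO2)"
      unfolding fag_def using Xi_unbased[OF a2T] by simp
    have T1: "gen (Xi ?U a1) - S1 \<in> fag (unbased_maps ?U CO1)"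
      "\<forall>R\<in>Fsets (wr_top ?U X1 x1) None r. restr R (linext (sharp ?U X1 x1 y0) (gen (Xi ?U a1) - S1)) = 0"
      using S1(3) unfolding filtX_def filt_def by auto
    have T2: "gen (Xi ?U a2) - S2 \<in> fag (unbased_maps ?U CO2)"
      "\<forall>R\<in>Fsets (wr_top ?U X2 x2) None r. restr R (linext (sharp ?U X2 x2 y0) (gen (Xi ?U a2) - S2)) = 0"
      using S2(3) unfolding filtX_def filt_def by auto
    have b1: "bil ?J (gen (Xi ?U a1) - S1) (gen (Xi ?U a2)) \<in> filtX ?U W (Inl x1) Y y0 (r + 1)"
      by (rule filtX_bil[OF u0 T1(1) G2u _ refl]) (use T1(2) in simp)
    have b2: "bil ?J S1 (gen (Xi ?U a2) - S2) \<in> filtX ?U W (Inl x1) Y y0 (r + 1)"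
      by (rule filtX_bil[OF u0 S1u T2(1) _ refl]) (use T2(2) in simp)
    have XiJ: "Xi ?U (wm a1 a2) = ?J (Xi ?U a1) (Xi ?U a2)"
      unfolding Xi_def JD_def by (rule restrict_ext) simp
    have "gen (Xi ?U (wm a1 a2)) = bil ?J (gen (Xi ?U a1)) (gen (Xi ?U a2))"
      unfolding XiJ gen_def by simp
    then have "gen (Xi ?U (wm a1 a2)) - bil ?J S1 S2
        = bil ?J (gen (Xi ?U a1) - S1) (gen (Xi ?U a2)) + bil ?J S1 (gen (Xi ?U a2) - S2)"
      by (simp add: bil_diff1 bil_diff2)
    then have fX: "gen (Xi ?U (wm a1 a2)) - bil ?J S1 S2 \<in> filtX ?U W (Inl x1) Y y0 (r + 1)"
      using filtX_add[OF b1 b2] by simp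
    show "\<exists>S. S \<in> fag (unbased_maps ?U (subtopology COW (path_component_of_set COW (const_map W y0))))
          \<and> fissile E S \<and> gen (Xi ?U (wm a1 a2)) - S \<in> filtX ?U W (Inl x1) Y y0 (r + 1)"
      using kS fS fX by blast
  qed
qed

end
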